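(* In the curve-version universal shuffle algebra, for integers $n_1\ge n_2\ge\cdots\ge n_k$, $$z_1^{n_1}*\cdots*z_1^{n_k}=z_1^{n_1}\cdots z_k^{n_k}\sum_{\sigma\text{ admissible}}\ \prod_{i,j:\ \sigma(i)<\sigma(j)}(1-\Delta_{ij})\ +\ \dots,$$ where $\dots$ denotes a combination of monomials in $z_1,\dots,z_k$ of lower lexicographic order than $z_1^{n_1}\cdots z_k^{n_k}$, and a permutation $\sigma\in S(k)$ is called admissible if $i>j$ and $\sigma(i)<\sigma(j)$ imply $n_i=n_j$.
   Context: For $k\in\mathbb{N}$, $\mathbb{F}_k$ is the commutative ring generated over $\mathbb{Z}$ by $\Delta_{ij}$ ($1\le i\ne j\le k$) subject to $\Delta_{ij}=\Delta_{ji}$ and $\Delta_{ij}\cdot P=0$ for every expression $P$ anti-symmetric in $i,j$. $S(k)$ acts on $\mathbb{F}_k$ by permuting indices; $\iota_{\mathrm{first}}:\mathbb{F}_k\to\mathbb{F}_{k+k'}$, $\Delta_{ij}\mapsto\Delta_{ij}$; $\iota_{\mathrm{last}}:\mathbb{F}_{k'}\to\mathbb{F}_{k+k'}$, $\Delta_{ij}\mapsto\Delta_{i+k,j+k}$. $\zeta_{ij}(x)=1+\Delta_{ij}\frac{x}{1-x}$. The shuffle product on $\bigoplus_k\mathbb{F}_k(z_1,\dots,z_k)^{\mathrm{Sym}}$ (functions invariant under simultaneous permutation of variables and indices) is $$R*R'=\mathrm{Sym}\Big[\iota_{\mathrm{first}}(R)(z_1,..,z_k)\,\iota_{\mathrm{last}}(R')(z_{k+1},..,z_{k+k'})\prod_{1\le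 i\le k<j\le k+k'}\zeta_{ij}(z_i/z_j)\Big],$$ $\mathrm{Sym}\,F=\sum_{\sigma\in S(k+k')}(\sigma\circ F)(z_{\sigma(1)},\dots,z_{\sigma(k+k')})$, with $\sigma$ acting on coefficients as well. Elements $z_1^{n_1}*\cdots*z_1^{n_k}$ are Laurent polynomials in $z_1,\dots,z_k$ with coefficients in $\mathbb{F}_k$. *)

theory Defs
  imports "HOL-Library.Poly_Mapping" "HOL-Combinatorics.Permutations" "HOL-Combinatorics.Transposition"
begin

text \<open>Monomials in the variables Delta_ij are finitely supported maps from index pairs
  to exponents; the variable Delta_ij = Delta_ji is stored under the key (min i j, max i j).
  dpoly is the polynomial ring Z[Delta_ij]; lpoly is the ring of Laurent polynomials in
  z_1, z_2, ... (exponent vectors nat =>0 int) with coefficients in dpoly.\<close>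

type_synonym dpoly = "((nat \<times> nat) \<Rightarrow>\<^sub>0 nat) \<Rightarrow>\<^sub>0 int"
type_synonym lpoly = "(nat \<Rightarrow>\<^sub>0 int) \<Rightarrow>\<^sub>0 dpoly"

definition Delta :: "nat \<Rightarrow> nat \<Rightarrow> dpoly" where
  "Delta i j = Poly_Mapping.single (Poly_Mapping.single (min i j, max i j) 1) 1"

definition zvar :: "nat \<Rightarrow> lpoly" where
  "zvar i = Poly_Mapping.single (Poly_Mapping.single i 1) 1"

definition const :: "dpoly \<Rightarrow> lpoly" where
  "const c = Poly_Mapping.single 0 c"

definition zexp :: "nat \<Rightarrow> (nat \<Rightarrow> int) \<Rightarrow> (nat \<Rightarrow>\<^sub>0 int)" where
  "zexp k n = (\<Sum>i\<in>{1..k}. Poly_Mapping.single i (n i))"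

definition zmono :: "nat \<Rightarrow> (nat \<Rightarrow> int) \<Rightarrow> lpoly" where
  "zmono k n = Poly_Mapping.single (zexp k n) 1"

definition act_dmon :: "(nat \<Rightarrow> nat) \<Rightarrow> ((nat \<times> nat) \<Rightarrow>\<^sub>0 nat) \<Rightarrow> ((nat \<times> nat) \<Rightarrow>\<^sub>0 nat)" where
  "act_dmon \<sigma> m = (\<Sum>p\<in>Poly_Mapping.keys m.
      Poly_Mapping.single (min (\<sigma> (fst p)) (\<sigma> (snd p)), max (\<sigma> (fst p)) (\<sigma> (snd p))) (Poly_Mapping.lookup m p))"

definition act_d :: "(nat \<Rightarrow> nat) \<Rightarrow> dpoly \<Rightarrow> dpoly" where
  "act_d \<sigma> P = (\<Sum>m\<in>Poly_Mapping.keys P. Poly_Mapping.single (act_dmon \<sigma> m) (Poly_Mapping.lookup P m))"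

definition act_zexp :: "(nat \<Rightarrow> nat) \<Rightarrow> (nat \<Rightarrow>\<^sub>0 int) \<Rightarrow> (nat \<Rightarrow>\<^sub>0 int)" where
  "act_zexp \<sigma> e = (\<Sum>i\<in>Poly_Mapping.keys e. Poly_Mapping.single (\<sigma> i) (Poly_Mapping.lookup e i))"

definition act :: "(nat \<Rightarrow> nat) \<Rightarrow> lpoly \<Rightarrow> lpoly" where
  "act \<sigma> F = (\<Sum>e\<in>Poly_Mapping.keys F. Poly_Mapping.single (act_zexp \<sigma> e) (act_d \<sigma> (Poly_Mapping.lookup F e)))"

definition in_Fk :: "nat \<Rightarrow> dpoly \<Rightarrow> bool" where
  "in_Fk k P \<longleftrightarrow> (\<forall>m\<in>Poly_Mapping.keys P. \<forall>p\<in>Poly_Mapping.keys m. 1 \<le> fst p \<and> fst p < snd p \<and> snd p \<le> k)"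

inductive_set Fk_ideal :: "nat \<Rightarrow> dpoly set" for k :: nat where
  gen: "\<lbrakk>i \<in> {1..k}; j \<in> {1..k}; i \<noteq> j; in_Fk k P; act_d (Transposition.transpose i j) P = - P\<rbrakk>
          \<Longrightarrow> Delta i j * P \<in> Fk_ideal k"
| zero: "0 \<in> Fk_ideal k"
| add: "\<lbrakk>a \<in> Fk_ideal k; b \<in> Fk_ideal k\<rbrakk> \<Longrightarrow> a + b \<in> Fk_ideal k"
| mult: "a \<in> Fk_ideal k \<Longrightarrow> r * a \<in> Fk_ideal k"

definition Fk_eq :: "nat \<Rightarrow> lpoly \<Rightarrow> lpoly \<Rightarrow> bool" where
  "Fk_eq k F G \<longleftrightarrow> (\<forall>e. Poly_Mapping.lookup (F - G) e \<in> Fk_ideal k)"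

text \<open>A fraction (N, D) stands for N / D; all denominators occurring are products of
  differences z_j - z_i (non-zero-divisors), so equality of fractions is cross-multiplication.\<close>
type_synonym frac = "lpoly \<times> lpoly"

definition frac_eq :: "nat \<Rightarrow> frac \<Rightarrow> frac \<Rightarrow> bool" where
  "frac_eq k F G \<longleftrightarrow> Fk_eq k (fst F * snd G) (fst G * snd F)"

definition frac_of :: "lpoly \<Rightarrow> frac" where
  "frac_of L = (L, 1)"

definition frac_mult :: "frac \<Rightarrow> frac \<Rightarrow> frac" where
  "frac_mult F G = (fst F * fst G, snd F * snd G)"

definition frac_prod :: "('a \<Rightarrow> frac) \<Rightarrow> 'a set \<Rightarrow> frac" where
  "frac_prod f S = ((\<Prod>x\<in>S. fst (f x)), (\<Prod>x\<in>S. snd (f x)))"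

definition frac_sum :: "('a \<Rightarrow> frac) \<Rightarrow> 'a set \<Rightarrow> frac" where
  "frac_sum f S = ((\<Sum>x\<in>S. fst (f x) * (\<Prod>y\<in>S - {x}. snd (f y))), (\<Prod>y\<in>S. snd (f y)))"

definition act_frac :: "(nat \<Rightarrow> nat) \<Rightarrow> frac \<Rightarrow> frac" where
  "act_frac \<sigma> F = (act \<sigma> (fst F), act \<sigma> (snd F))"

definition Sym :: "nat \<Rightarrow> frac \<Rightarrow> frac" where
  "Sym k F = frac_sum (\<lambda>\<sigma>. act_frac \<sigma> F) {\<sigma>. \<sigma> permutes {1..k}}"

text \<open>zeta_ij(z_i/z_j) = 1 + Delta_ij (z_i/z_j)/(1 - z_i/z_j) = (z_j - z_i + Delta_ij z_i)/(z_j - z_i).\<close>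
definition zeta :: "nat \<Rightarrow> nat \<Rightarrow> frac" where
  "zeta i j = (zvar j - zvar i + const (Delta i j) * zvar i, zvar j - zvar i)"

definition pairs :: "nat \<Rightarrow> (nat \<times> nat) set" where
  "pairs k = {(i, j). 1 \<le> i \<and> i < j \<and> j \<le> k}"

text \<open>The k-fold shuffle product z_1^{n_1} * ... * z_1^{n_k}
  = Sym [ z_1^{n_1} ... z_k^{n_k} prod_{i<j} zeta_ij(z_i/z_j) ].\<close>
definition shuffle_monomials :: "nat \<Rightarrow> (nat \<Rightarrow> int) \<Rightarrow> frac" where
  "shuffle_monomials k n =
     Sym k (frac_mult (frac_of (zmono k n)) (frac_prod (\<lambda>(i, j). zeta i j) (pairs k)))"

definition admissible :: "nat \<Rightarrow> (nat \<Rightarrow> int) \<Rightarrow> (nat \<Rightarrow> nat) \<Rightarrow> bool" where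
  "admissible k n \<sigma> \<longleftrightarrow>
     (\<forall>i\<in>{1..k}. \<forall>j\<in>{1..k}. i > j \<and> \<sigma> i < \<sigma> j \<longrightarrow> n i = n j)"

definition lex_less :: "nat \<Rightarrow> (nat \<Rightarrow>\<^sub>0 int) \<Rightarrow> (nat \<Rightarrow> int) \<Rightarrow> bool" where
  "lex_less k e n \<longleftrightarrow>
     (\<exists>i\<in>{1..k}. (\<forall>j\<in>{1..<i}. Poly_Mapping.lookup e j = n j) \<and> Poly_Mapping.lookup e i < n i)"

definition lead_coeff_shuffle :: "nat \<Rightarrow> (nat \<Rightarrow> int) \<Rightarrow> dpoly" where
  "lead_coeff_shuffle k n =
     (\<Sum>\<sigma>\<in>{\<sigma>. \<sigma> permutes {1..k} \<and> admissible k n \<sigma>}.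
        \<Prod>(i, j)\<in>{(i, j) \<in> pairs k. \<sigma> i < \<sigma> j}. 1 - Delta i j)"

end

theory Submission
  imports Defs "HOL-Library.Product_Lexorder"
begin

definition pmap :: "('a \<Rightarrow> 'b) \<Rightarrow> ('c::zero \<Rightarrow> 'd::comm_monoid_add) \<Rightarrow> ('a \<Rightarrow>\<^sub>0 'c) \<Rightarrow> ('b \<Rightarrow>\<^sub>0 'd)" where
  "pmap s \<phi> F = (\<Sum>e\<in>Poly_Mapping.keys F. Poly_Mapping.single (s e) (\<phi> (Poly_Mapping.lookup F e)))"

lemma pmap_superset:
  assumes "finite S" "Poly_Mapping.keys F \<subseteq> S" "\<phi> 0 = 0"
  shows "pmap s \<phi> F = (\<Sum>e\<in>S. Poly_Mapping.single (s e) (\<phi> (Poly_Mapping.lookup F e)))"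
  unfolding pmap_def
  by (rule sum.mono_neutral_left) (use assms in \<open>auto simp: in_keys_iff\<close>)

lemma lookup_pmap:
  "Poly_Mapping.lookup (pmap s \<phi> F) x = (\<Sum>e\<in>{e\<in>Poly_Mapping.keys F. s e = x}. \<phi> (Poly_Mapping.lookup F e))"
  unfolding pmap_def lookup_sum lookup_single
  by (rule sum.mono_neutral_cong_right) (auto simp: when_def)

lemma keys_pmap: "Poly_Mapping.keys (pmap s \<phi> F) \<subseteq> s ` Poly_Mapping.keys F"
proof
  fix x assume "x \<in> Poly_Mapping.keys (pmap s \<phi> F)"
  then have "Poly_Mapping.lookup (pmap s \<phi> F) x \<noteq> 0" by (simp add: in_keys_iff)
  then have "{e\<in>Poly_Mapping.keys F. s e = x} \<noteq> {}" unfolding lookup_pmap by (metis sum.empty)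
  then show "x \<in> s ` Poly_Mapping.keys F" by auto
qed

lemma pmap_add:
  assumes "\<phi> 0 = 0" "\<And>a b. \<phi> (a + b) = \<phi> a + \<phi> b"
  shows "pmap s \<phi> (F + G) = pmap s \<phi> F + pmap s \<phi> G"
proof -
  let ?S = "Poly_Mapping.keys F \<union> Poly_Mapping.keys G"
  have fin: "finite ?S" by simp
  have "pmap s \<phi> (F + G) = (\<Sum>e\<in>?S. Poly_Mapping.single (s e) (\<phi> (Poly_Mapping.lookup (F+G) e)))"
    by (rule pmap_superset) (use assms keys_add[of F G] in auto)
  also have "\<dots> = (\<Sum>e\<in>?S. Poly_Mapping.single (s e) (\<phi> (Poly_Mapping.lookup F e))) +
        (\<Sum>e\<in>?S. Poly_Mapping.single (s e) (\<phi> (Poly_Mapping.lookup G e)))"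
    by (simp add: lookup_add assms single_add sum.distrib)
  also have "\<dots> = pmap s \<phi> F + pmap s \<phi> G"
    by (simp add: pmap_superset[symmetric] assms)
  finally show ?thesis .
qed

lemma pmap_zero [simp]: "pmap s \<phi> 0 = 0"
  by (simp add: pmap_def)

lemma pmap_sum:
  assumes "\<phi> 0 = 0" "\<And>a b. \<phi> (a + b) = \<phi> a + \<phi> b"
  shows "pmap s \<phi> (\<Sum>i\<in>I. F i) = (\<Sum>i\<in>I. pmap s \<phi> (F i))"
  by (induction I rule: infinite_finite_induct) (auto simp: pmap_add[OF assms])

lemma pmap_single:
  assumes "\<phi> 0 = 0"
  shows "pmap s \<phi> (Poly_Mapping.single e c) = Poly_Mapping.single (s e) (\<phi> c)"
  by (cases "c = 0") (auto simp: pmap_def assms)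

lemma poly_mapping_sum_singles:
  "F = (\<Sum>e\<in>Poly_Mapping.keys F. Poly_Mapping.single e (Poly_Mapping.lookup F e))"
  by (rule poly_mapping_eqI) (simp add: lookup_sum lookup_single when_def in_keys_iff)

lemma pmap_mult:
  fixes F G :: "('a::comm_monoid_add \<Rightarrow>\<^sub>0 'c::comm_semiring_0)"
  assumes "\<phi> 0 = 0" "\<And>a b. \<phi> (a + b) = \<phi> a + \<phi> b" "\<And>a b. \<phi> (a * b) = (\<phi> a * \<phi> b :: 'd::comm_semiring_0)"
    and "\<And>a b. s (a + b) = s a + (s b :: 'b::comm_monoid_add)"
  shows "pmap s \<phi> (F * G) = pmap s \<phi> F * pmap s \<phi> G"
proof -
  have "F * G = (\<Sum>a\<in>Poly_Mapping.keys F. \<Sum>b\<in>Poly_Mapping.keys G.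
      Poly_Mapping.single a (Poly_Mapping.lookup F a) * Poly_Mapping.single b (Poly_Mapping.lookup G b))"
    by (subst (1) poly_mapping_sum_singles, subst (2) poly_mapping_sum_singles) (simp add: sum_product)
  also have "\<dots> = (\<Sum>a\<in>Poly_Mapping.keys F. \<Sum>b\<in>Poly_Mapping.keys G.
      Poly_Mapping.single (a + b) (Poly_Mapping.lookup F a * Poly_Mapping.lookup G b))"
    by (simp add: mult_single)
  finally have "pmap s \<phi> (F * G) = (\<Sum>a\<in>Poly_Mapping.keys F. \<Sum>b\<in>Poly_Mapping.keys G.
      Poly_Mapping.single (s a + s b) (\<phi> (Poly_Mapping.lookup F a) * \<phi> (Poly_Mapping.lookup G b)))"
    by (simp add: pmap_sum[OF assms(1,2)] pmap_single assms)
  also have "\<dots> = pmap s \<phi> F * pmap s \<phi> G"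
    by (simp add: pmap_def sum_product mult_single)
  finally show ?thesis .
qed

lemma pmap_comp:
  assumes "\<phi> 0 = 0" "\<And>a b. \<phi> (a + b) = \<phi> a + \<phi> b" "\<psi> 0 = 0"
  shows "pmap s \<phi> (pmap t \<psi> F) = pmap (s \<circ> t) (\<phi> \<circ> \<psi>) F"
proof -
  have "pmap t \<psi> F = (\<Sum>e\<in>Poly_Mapping.keys F. Poly_Mapping.single (t e) (\<psi> (Poly_Mapping.lookup F e)))"
    by (simp add: pmap_def)
  then have "pmap s \<phi> (pmap t \<psi> F) = (\<Sum>e\<in>Poly_Mapping.keys F. pmap s \<phi> (Poly_Mapping.single (t e) (\<psi> (Poly_Mapping.lookup F e))))"
    by (simp add: pmap_sum[OF assms(1,2)])
  also have "\<dots> = pmap (s \<circ> t) (\<phi> \<circ> \<psi>) F"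
    by (simp add: pmap_single[of \<phi>] assms) (simp add: pmap_def)
  finally show ?thesis .
qed

lemma pmap_cong:
  assumes "\<And>e. e \<in> Poly_Mapping.keys F \<Longrightarrow> s e = s' e" "\<And>e. e \<in> Poly_Mapping.keys F \<Longrightarrow> \<phi> (Poly_Mapping.lookup F e) = \<phi>' (Poly_Mapping.lookup F e)"
  shows "pmap s \<phi> F = pmap s' \<phi>' F"
  unfolding pmap_def using assms by (intro sum.cong) auto

lemma pmap_id: "pmap (\<lambda>x. x) (\<lambda>x. x) F = F"
  unfolding pmap_def by (rule poly_mapping_sum_singles[symmetric])

lemma pmap_uminus:
  fixes F :: "'a \<Rightarrow>\<^sub>0 'c::ab_group_add"
  assumes "\<phi> 0 = 0" "\<And>a b. \<phi> (a + b) = (\<phi> a + \<phi> b :: 'd::ab_group_add)"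
  shows "pmap s \<phi> (- F) = - pmap s \<phi> F"
proof -
  have "pmap s \<phi> (F + - F) = pmap s \<phi> F + pmap s \<phi> (-F)" by (rule pmap_add[OF assms])
  then show ?thesis using minus_unique[of "pmap s \<phi> F" "pmap s \<phi> (-F)"] by simp
qed

lemma pmap_diff:
  fixes F :: "'a \<Rightarrow>\<^sub>0 'c::ab_group_add"
  assumes "\<phi> 0 = 0" "\<And>a b. \<phi> (a + b) = (\<phi> a + \<phi> b :: 'd::ab_group_add)"
  shows "pmap s \<phi> (F - G) = pmap s \<phi> F - pmap s \<phi> G"
  using pmap_add[OF assms, of s F "-G"] pmap_uminus[OF assms, of s G] by simp

lemma pmap_one:
  assumes "\<phi> 0 = 0" "\<phi> 1 = 1" "s 0 = 0"
  shows "pmap s \<phi> (1 :: 'a::zero \<Rightarrow>\<^sub>0 'c::zero_neq_one) = (1 :: 'b::zero \<Rightarrow>\<^sub>0 'd::{comm_monoid_add,zero_neq_one})"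
proof -
  have "(1 :: 'a \<Rightarrow>\<^sub>0 'c) = Poly_Mapping.single 0 1" by simp
  then show ?thesis using pmap_single[of \<phi> s 0 1] assms by simp
qed

definition gp :: "(nat \<Rightarrow> nat) \<Rightarrow> nat \<times> nat \<Rightarrow> nat \<times> nat" where
  "gp \<sigma> p = (min (\<sigma> (fst p)) (\<sigma> (snd p)), max (\<sigma> (fst p)) (\<sigma> (snd p)))"

lemma act_dmon_pmap: "act_dmon \<sigma> m = pmap (gp \<sigma>) (\<lambda>x. x) m"
  by (simp add: act_dmon_def pmap_def gp_def)

lemma act_d_pmap: "act_d \<sigma> P = pmap (act_dmon \<sigma>) (\<lambda>x. x) P"
  by (simp add: act_d_def pmap_def)

lemma act_zexp_pmap: "act_zexp \<sigma> e = pmap \<sigma> (\<lambda>x. x) e"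
  by (simp add: act_zexp_def pmap_def)

lemma act_pmap: "act \<sigma> F = pmap (act_zexp \<sigma>) (act_d \<sigma>) F"
  by (simp add: act_def pmap_def)

lemma act_dmon_add: "act_dmon \<sigma> (a + b) = act_dmon \<sigma> a + act_dmon \<sigma> b"
  unfolding act_dmon_pmap by (rule pmap_add) auto

lemma act_zexp_add: "act_zexp \<sigma> (a + b) = act_zexp \<sigma> a + act_zexp \<sigma> b"
  unfolding act_zexp_pmap by (rule pmap_add) auto

lemma act_dmon_zero [simp]: "act_dmon \<sigma> 0 = 0"
  by (simp add: act_dmon_pmap)

lemma act_zexp_zero [simp]: "act_zexp \<sigma> 0 = 0"
  by (simp add: act_zexp_pmap)

lemma act_d_zero [simp]: "act_d \<sigma> 0 = 0"
  by (simp add: act_d_pmap)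

lemma act_d_add: "act_d \<sigma> (a + b) = act_d \<sigma> a + act_d \<sigma> b"
  unfolding act_d_pmap by (rule pmap_add) auto

lemma act_d_mult: "act_d \<sigma> (a * b) = act_d \<sigma> a * act_d \<sigma> b"
  unfolding act_d_pmap by (rule pmap_mult) (auto simp: act_dmon_add)

lemma act_d_one [simp]: "act_d \<sigma> 1 = 1"
  unfolding act_d_pmap by (rule pmap_one) auto

lemma act_d_uminus: "act_d \<sigma> (- a) = - act_d \<sigma> a"
  unfolding act_d_pmap by (rule pmap_uminus) auto

lemma act_d_diff: "act_d \<sigma> (a - b) = act_d \<sigma> a - act_d \<sigma> b"
  unfolding act_d_pmap by (rule pmap_diff) auto

lemma act_zero [simp]: "act \<sigma> 0 = 0"
  by (simp add: act_pmap)

lemma act_add: "act \<sigma> (a + b) = act \<sigma> a + act \<sigma> b"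
  unfolding act_pmap by (rule pmap_add) (auto simp: act_d_add)

lemma act_mult: "act \<sigma> (a * b) = act \<sigma> a * act \<sigma> b"
  unfolding act_pmap by (rule pmap_mult) (auto simp: act_d_add act_d_mult act_zexp_add)

lemma act_one [simp]: "act \<sigma> 1 = 1"
  unfolding act_pmap by (rule pmap_one) auto

lemma act_uminus: "act \<sigma> (- a) = - act \<sigma> a"
  unfolding act_pmap by (rule pmap_uminus) (auto simp: act_d_add)

lemma act_diff: "act \<sigma> (a - b) = act \<sigma> a - act \<sigma> b"
  unfolding act_pmap by (rule pmap_diff) (auto simp: act_d_add)

lemma act_sum: "act \<sigma> (\<Sum>i\<in>I. f i) = (\<Sum>i\<in>I. act \<sigma> (f i))"
  unfolding act_pmap by (rule pmap_sum) (auto simp: act_d_add)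

lemma act_prod: "act \<sigma> (\<Prod>i\<in>I. f i) = (\<Prod>i\<in>I. act \<sigma> (f i))"
  by (induction I rule: infinite_finite_induct) (auto simp: act_mult)

lemma act_power: "act \<sigma> (a ^ m) = act \<sigma> a ^ m"
  by (induction m) (auto simp: act_mult)

lemma act_zvar [simp]: "act \<sigma> (zvar i) = zvar (\<sigma> i)"
  by (simp add: zvar_def act_pmap pmap_single act_zexp_pmap)

lemma act_const [simp]: "act \<sigma> (const c) = const (act_d \<sigma> c)"
  by (simp add: const_def act_pmap pmap_single)

lemma act_d_Delta [simp]: "act_d \<sigma> (Delta i j) = Delta (\<sigma> i) (\<sigma> j)"
  by (simp add: Delta_def act_d_pmap pmap_single act_dmon_pmap gp_def min_def max_def)

lemma Delta_sym: "Delta i j = Delta j i"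
  by (simp add: Delta_def min.commute max.commute)

lemma gp_comp: "gp \<tau> (gp \<sigma> p) = gp (\<tau> \<circ> \<sigma>) p"
  by (auto simp: gp_def min_def max_def)

lemma act_dmon_comp: "act_dmon \<tau> (act_dmon \<sigma> m) = act_dmon (\<tau> \<circ> \<sigma>) m"
  unfolding act_dmon_pmap by (subst pmap_comp) (auto simp: comp_def gp_comp)

lemma act_d_comp: "act_d \<tau> (act_d \<sigma> P) = act_d (\<tau> \<circ> \<sigma>) P"
  unfolding act_d_pmap by (subst pmap_comp) (auto simp: comp_def act_dmon_comp)

lemma act_zexp_comp: "act_zexp \<tau> (act_zexp \<sigma> e) = act_zexp (\<tau> \<circ> \<sigma>) e"
  unfolding act_zexp_pmap by (subst pmap_comp) (auto simp: comp_def)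

lemma act_comp: "act \<tau> (act \<sigma> F) = act (\<tau> \<circ> \<sigma>) F"
  unfolding act_pmap by (subst pmap_comp) (auto simp: comp_def act_zexp_comp act_d_comp act_d_add)

lemma Fk_ideal_uminus: "a \<in> Fk_ideal k \<Longrightarrow> - a \<in> Fk_ideal k"
  using Fk_ideal.mult[of a k "-1"] by simp

lemma Fk_ideal_diff: "a \<in> Fk_ideal k \<Longrightarrow> b \<in> Fk_ideal k \<Longrightarrow> a - b \<in> Fk_ideal k"
  using Fk_ideal.add[of a k "-b"] Fk_ideal_uminus by simp

lemma Fk_ideal_mult_right: "a \<in> Fk_ideal k \<Longrightarrow> a * r \<in> Fk_ideal k"
  using Fk_ideal.mult[of a k r] by (simp add: mult.commute)

lemma Fk_ideal_sum: "(\<And>i. i \<in> I \<Longrightarrow> f i \<in> Fk_ideal k) \<Longrightarrow> (\<Sum>i\<in>I. f i) \<in> Fk_ideal k"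
  by (induction I rule: infinite_finite_induct) (auto intro: Fk_ideal.intros)

lemma Fk_ideal_when: "a \<in> Fk_ideal k \<Longrightarrow> (a when P) \<in> Fk_ideal k"
  by (cases P) (auto intro: Fk_ideal.intros)

lemma lookup_mult_keys:
  "Poly_Mapping.lookup (F * G) e =
     (\<Sum>a\<in>Poly_Mapping.keys F. \<Sum>b\<in>Poly_Mapping.keys G. (Poly_Mapping.lookup F a * Poly_Mapping.lookup G b when e = a + b))"
proof -
  have "F * G = (\<Sum>a\<in>Poly_Mapping.keys F. \<Sum>b\<in>Poly_Mapping.keys G.
      Poly_Mapping.single a (Poly_Mapping.lookup F a) * Poly_Mapping.single b (Poly_Mapping.lookup G b))"
    by (subst (1) poly_mapping_sum_singles, subst (2) poly_mapping_sum_singles) (simp add: sum_product)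
  also have "\<dots> = (\<Sum>a\<in>Poly_Mapping.keys F. \<Sum>b\<in>Poly_Mapping.keys G.
      Poly_Mapping.single (a + b) (Poly_Mapping.lookup F a * Poly_Mapping.lookup G b))"
    by (simp add: mult_single)
  finally show ?thesis by (simp add: lookup_sum lookup_single when_def eq_commute)
qed

lemma lookup_single_mult:
  fixes F :: "('a::ab_group_add \<Rightarrow>\<^sub>0 'b::comm_ring_1)"
  shows "Poly_Mapping.lookup (Poly_Mapping.single u c * F) e = c * Poly_Mapping.lookup F (e - u)"
proof (cases "c = 0")
  case True then show ?thesis by simp
next
  case False
  have "Poly_Mapping.lookup (Poly_Mapping.single u c * F) e =
     (\<Sum>b\<in>Poly_Mapping.keys F. (c * Poly_Mapping.lookup F b when e = u + b))"
    using False by (simp add: lookup_mult_keys)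
  also have "\<dots> = (\<Sum>b\<in>Poly_Mapping.keys F \<inter> {e - u}. c * Poly_Mapping.lookup F b)"
    by (rule sum.mono_neutral_cong_right) (auto simp: when_def algebra_simps)
  also have "\<dots> = c * Poly_Mapping.lookup F (e - u)"
    by (cases "e - u \<in> Poly_Mapping.keys F") (auto simp: in_keys_iff)
  finally show ?thesis .
qed

lemma lookup_const_mult: "Poly_Mapping.lookup (const c * F) e = c * Poly_Mapping.lookup F e"
  by (simp add: const_def lookup_single_mult)

section \<open>The coefficient ideal on Laurent polynomials\<close>

definition IL :: "nat \<Rightarrow> lpoly \<Rightarrow> bool" where
  "IL k F \<longleftrightarrow> (\<forall>e. Poly_Mapping.lookup F e \<in> Fk_ideal k)"

lemma Fk_eq_IL: "Fk_eq k F G \<longleftrightarrow> IL k (F - G)"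
  by (simp add: Fk_eq_def IL_def)

lemma IL_zero [simp]: "IL k 0"
  by (simp add: IL_def Fk_ideal.zero)

lemma IL_add: "IL k F \<Longrightarrow> IL k G \<Longrightarrow> IL k (F + G)"
  by (simp add: IL_def lookup_add Fk_ideal.add)

lemma IL_uminus: "IL k F \<Longrightarrow> IL k (- F)"
  by (simp add: IL_def Fk_ideal_uminus)

lemma IL_diff: "IL k F \<Longrightarrow> IL k G \<Longrightarrow> IL k (F - G)"
  by (simp add: IL_def lookup_minus Fk_ideal_diff)

lemma IL_sum: "(\<And>i. i \<in> I \<Longrightarrow> IL k (f i)) \<Longrightarrow> IL k (\<Sum>i\<in>I. f i)"
  by (induction I rule: infinite_finite_induct) (auto intro: IL_add)

lemma IL_mult_left: "IL k F \<Longrightarrow> IL k (G * F)"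
  unfolding IL_def lookup_mult_keys
  by (auto intro!: Fk_ideal_sum Fk_ideal_when Fk_ideal.mult)

lemma IL_mult_right: "IL k F \<Longrightarrow> IL k (F * G)"
  using IL_mult_left[of k F G] by (simp add: mult.commute)

lemma perm_range: "\<sigma> permutes {1..k} \<Longrightarrow> x \<in> {1..k} \<Longrightarrow> \<sigma> x \<in> {1..k}"
  by (metis permutes_in_image)

lemma perm_range': "\<sigma> permutes {1..k} \<Longrightarrow> 1 \<le> x \<Longrightarrow> x \<le> k \<Longrightarrow> 1 \<le> \<sigma> x \<and> \<sigma> x \<le> k"
  using perm_range[of \<sigma> k x] by simp

definition Mk :: "nat \<Rightarrow> ((nat \<times> nat) \<Rightarrow>\<^sub>0 nat) set" where
  "Mk k = {m. \<forall>p\<in>Poly_Mapping.keys m. 1 \<le> fst p \<and> fst p < snd p \<and> snd p \<le> k}"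

lemma in_Fk_Mk: "in_Fk k P \<longleftrightarrow> Poly_Mapping.keys P \<subseteq> Mk k"
  by (auto simp: in_Fk_def Mk_def)

lemma Mk_add: "a \<in> Mk k \<Longrightarrow> b \<in> Mk k \<Longrightarrow> a + b \<in> Mk k"
  using keys_add[of a b] unfolding Mk_def by blast

lemma in_Fk_zero [simp]: "in_Fk k 0"
  by (simp add: in_Fk_def)

lemma in_Fk_add: "in_Fk k P \<Longrightarrow> in_Fk k Q \<Longrightarrow> in_Fk k (P + Q)"
  unfolding in_Fk_Mk using keys_add[of P Q] by blast

lemma in_Fk_uminus: "in_Fk k P \<Longrightarrow> in_Fk k (- P)"
  unfolding in_Fk_Mk by simp

lemma in_Fk_diff: "in_Fk k P \<Longrightarrow> in_Fk k Q \<Longrightarrow> in_Fk k (P - Q)"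
  unfolding in_Fk_Mk using keys_diff[of P Q] by blast

lemma in_Fk_mult: "in_Fk k P \<Longrightarrow> in_Fk k Q \<Longrightarrow> in_Fk k (P * Q)"
  unfolding in_Fk_Mk using keys_mult[of P Q] Mk_add by blast

lemma in_Fk_sum: "(\<And>i. i \<in> I \<Longrightarrow> in_Fk k (f i)) \<Longrightarrow> in_Fk k (\<Sum>i\<in>I. f i)"
  by (induction I rule: infinite_finite_induct) (auto intro: in_Fk_add)

lemma in_Fk_when: "in_Fk k P \<Longrightarrow> in_Fk k (P when b)"
  by (cases b) auto

lemma in_Fk_single0: "in_Fk k (Poly_Mapping.single 0 c)"
  by (simp add: in_Fk_def)

lemma in_Fk_one [simp]: "in_Fk k 1"
  by (simp add: in_Fk_def)

lemma in_Fk_of_int: "in_Fk k (of_int c)"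
  using in_Fk_single0[of k "of_int c"] by (simp only: single_of_int)

lemma in_Fk_Delta: "i \<in> {1..k} \<Longrightarrow> j \<in> {1..k} \<Longrightarrow> i \<noteq> j \<Longrightarrow> in_Fk k (Delta i j)"
  by (auto simp: in_Fk_def Delta_def min_def max_def)

lemma act_dmon_Mk:
  assumes "\<sigma> permutes {1..k}" "m \<in> Mk k"
  shows "act_dmon \<sigma> m \<in> Mk k"
proof -
  have "Poly_Mapping.keys (act_dmon \<sigma> m) \<subseteq> gp \<sigma> ` Poly_Mapping.keys m"
    unfolding act_dmon_pmap by (rule keys_pmap)
  moreover have "\<forall>p\<in>gp \<sigma> ` Poly_Mapping.keys m. 1 \<le> fst p \<and> fst p < snd p \<and> snd p \<le> k"
  proof
    fix p assume "p \<in> gp \<sigma> ` Poly_Mapping.keys m"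
    then obtain q where q: "q \<in> Poly_Mapping.keys m" "p = gp \<sigma> q" by auto
    then have q1: "fst q \<in> {1..k}" "snd q \<in> {1..k}" "fst q \<noteq> snd q"
      using assms(2) by (auto simp: Mk_def)
    then have "\<sigma> (fst q) \<in> {1..k}" "\<sigma> (snd q) \<in> {1..k}" "\<sigma> (fst q) \<noteq> \<sigma> (snd q)"
      using perm_range[OF assms(1)] q1(3) permutes_inj[OF assms(1)] by (auto simp: inj_eq)
    then show "1 \<le> fst p \<and> fst p < snd p \<and> snd p \<le> k"
      using q by (auto simp: gp_def min_def max_def)
  qed
  ultimately show ?thesis unfolding Mk_def by blast
qed

lemma in_Fk_act_d: "\<sigma> permutes {1..k} \<Longrightarrow> in_Fk k P \<Longrightarrow> in_Fk k (act_d \<sigma> P)"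
  unfolding in_Fk_Mk act_d_pmap using keys_pmap[of "act_dmon \<sigma>" "\<lambda>x. x" P] act_dmon_Mk by blast

definition good :: "nat \<Rightarrow> lpoly \<Rightarrow> bool" where
  "good k F \<longleftrightarrow> (\<forall>e\<in>Poly_Mapping.keys F. Poly_Mapping.keys e \<subseteq> {1..k} \<and> in_Fk k (Poly_Mapping.lookup F e))"

lemma good_lookup: "good k F \<Longrightarrow> in_Fk k (Poly_Mapping.lookup F e)"
  unfolding good_def by (cases "e \<in> Poly_Mapping.keys F") (auto simp: in_keys_iff)

lemma good_keys: "good k F \<Longrightarrow> e \<in> Poly_Mapping.keys F \<Longrightarrow> Poly_Mapping.keys e \<subseteq> {1..k}"
  unfolding good_def by auto

lemma goodI: "(\<And>e. e \<in> Poly_Mapping.keys F \<Longrightarrow> Poly_Mapping.keys e \<subseteq> {1..k}) \<Longrightarrow> (\<And>e. in_Fk k (Poly_Mapping.lookup F e)) \<Longrightarrow> good k F"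
  unfolding good_def by auto

lemma good_zero [simp]: "good k 0"
  by (simp add: good_def)

lemma good_add: assumes "good k F" "good k G" shows "good k (F + G)"
  by (rule goodI) (use keys_add[of F G] good_keys[OF assms(1)] good_keys[OF assms(2)] in blast,
     use assms in \<open>auto simp: lookup_add good_lookup intro!: in_Fk_add\<close>)

lemma good_uminus: assumes "good k F" shows "good k (- F)"
  by (rule goodI) (use good_keys[OF assms(1)] in simp, use assms in \<open>auto simp: good_lookup intro!: in_Fk_uminus\<close>)

lemma good_diff: assumes "good k F" "good k G" shows "good k (F - G)"
  by (rule goodI) (use keys_diff[of F G] good_keys[OF assms(1)] good_keys[OF assms(2)] in blast,
     use assms in \<open>auto simp: lookup_minus good_lookup intro!: in_Fk_diff\<close>)

lemma good_mult: "good k F \<Longrightarrow> good k G \<Longrightarrow> good k (F * G)"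
proof (rule goodI)
  fix e assume F: "good k F" and G: "good k G" and e: "e \<in> Poly_Mapping.keys (F * G)"
  then obtain a b where "a \<in> Poly_Mapping.keys F" "b \<in> Poly_Mapping.keys G" "e = a + b"
    using keys_mult[of F G] by blast
  then show "Poly_Mapping.keys e \<subseteq> {1..k}"
    using keys_add[of a b] good_keys[OF F] good_keys[OF G] by blast
next
  fix e assume F: "good k F" and G: "good k G"
  show "in_Fk k (Poly_Mapping.lookup (F * G) e)"
    unfolding lookup_mult_keys
    by (intro in_Fk_sum in_Fk_when in_Fk_mult good_lookup F G)
qed

lemma good_sum: "(\<And>i. i \<in> I \<Longrightarrow> good k (f i)) \<Longrightarrow> good k (\<Sum>i\<in>I. f i)"
  by (induction I rule: infinite_finite_induct) (auto intro: good_add)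

lemma good_one [simp]: "good k 1"
  by (rule goodI) (auto simp: lookup_one when_def)

lemma good_prod: "(\<And>i. i \<in> I \<Longrightarrow> good k (f i)) \<Longrightarrow> good k (\<Prod>i\<in>I. f i)"
  by (induction I rule: infinite_finite_induct) (auto intro: good_mult)

lemma good_power: "good k F \<Longrightarrow> good k (F ^ m)"
  by (induction m) (auto intro: good_mult)

lemma good_single: "Poly_Mapping.keys e \<subseteq> {1..k} \<Longrightarrow> in_Fk k c \<Longrightarrow> good k (Poly_Mapping.single e c)"
  by (rule goodI) (auto simp: lookup_single when_def split: if_splits)

lemma good_zvar: "i \<in> {1..k} \<Longrightarrow> good k (zvar i)"
  unfolding zvar_def by (rule good_single) auto

lemma good_const: "in_Fk k c \<Longrightarrow> good k (const c)"
  unfolding const_def by (rule good_single) auto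

lemma good_of_int: "good k (of_int c)"
proof -
  have "(of_int c :: lpoly) = Poly_Mapping.single 0 (of_int c)"
    by (simp flip: single_of_int)
  then show ?thesis using good_single[of 0 k "of_int c"] in_Fk_of_int by simp
qed

lemma good_act:
  assumes \<sigma>: "\<sigma> permutes {1..k}" and F: "good k F"
  shows "good k (act \<sigma> F)"
proof (rule goodI)
  fix e assume "e \<in> Poly_Mapping.keys (act \<sigma> F)"
  then obtain f where f: "f \<in> Poly_Mapping.keys F" "e = act_zexp \<sigma> f"
    using keys_pmap[of "act_zexp \<sigma>" "act_d \<sigma>" F] unfolding act_pmap by blast
  have "Poly_Mapping.keys e \<subseteq> \<sigma> ` Poly_Mapping.keys f"
    using f keys_pmap[of \<sigma> "\<lambda>x. x" f] unfolding act_zexp_pmap by blast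
  also have "\<dots> \<subseteq> {1..k}"
    using good_keys[OF F f(1)] perm_range[OF \<sigma>] by blast
  finally show "Poly_Mapping.keys e \<subseteq> {1..k}" .
next
  fix e show "in_Fk k (Poly_Mapping.lookup (act \<sigma> F) e)"
    unfolding act_pmap lookup_pmap
    by (intro in_Fk_sum in_Fk_act_d[OF \<sigma>] good_lookup[OF F])
qed

section \<open>Substitution z_a := z_b\<close>

definition sb :: "nat \<Rightarrow> nat \<Rightarrow> (nat \<Rightarrow>\<^sub>0 int) \<Rightarrow> (nat \<Rightarrow>\<^sub>0 int)" where
  "sb a b e = e + Poly_Mapping.single b (Poly_Mapping.lookup e a) - Poly_Mapping.single a (Poly_Mapping.lookup e a)"

lemma sb_add: "sb a b (e + f) = sb a b e + sb a b f"
  by (simp add: sb_def lookup_add single_add algebra_simps)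

lemma sb_zero [simp]: "sb a b 0 = 0"
  by (simp add: sb_def)

lemma lookup_sb: "Poly_Mapping.lookup (sb a b e) x =
   (if x = a \<and> a \<noteq> b then 0 else if x = b \<and> a \<noteq> b then Poly_Mapping.lookup e b + Poly_Mapping.lookup e a else Poly_Mapping.lookup e x)"
  unfolding sb_def lookup_add lookup_minus lookup_single by (cases "x = a"; cases "x = b") (simp_all add: when_def)

definition subst :: "nat \<Rightarrow> nat \<Rightarrow> lpoly \<Rightarrow> lpoly" where
  "subst a b F = pmap (sb a b) (\<lambda>x. x) F"

lemma subst_add: "subst a b (F + G) = subst a b F + subst a b G"
  unfolding subst_def by (rule pmap_add) auto

lemma subst_diff: "subst a b (F - G) = subst a b F - subst a b G"
  unfolding subst_def by (rule pmap_diff) auto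

lemma subst_uminus: "subst a b (- F) = - subst a b F"
  unfolding subst_def by (rule pmap_uminus) auto

lemma subst_mult: "subst a b (F * G) = subst a b F * subst a b G"
  unfolding subst_def by (rule pmap_mult) (auto simp: sb_add)

lemma subst_one [simp]: "subst a b 1 = 1"
  unfolding subst_def by (rule pmap_one) auto

lemma subst_zero [simp]: "subst a b 0 = 0"
  unfolding subst_def by simp

lemma subst_prod: "subst a b (\<Prod>i\<in>I. f i) = (\<Prod>i\<in>I. subst a b (f i))"
  by (induction I rule: infinite_finite_induct) (auto simp: subst_mult)

lemma subst_sum: "subst a b (\<Sum>i\<in>I. f i) = (\<Sum>i\<in>I. subst a b (f i))"
  unfolding subst_def by (rule pmap_sum) auto

lemma subst_single: "subst a b (Poly_Mapping.single e c) = Poly_Mapping.single (sb a b e) c"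
  unfolding subst_def by (rule pmap_single) auto

lemma subst_zvar [simp]: "subst a b (zvar i) = zvar (if i = a then b else i)"
  by (auto simp: zvar_def subst_single sb_def)

lemma subst_const [simp]: "subst a b (const c) = const c"
  by (simp add: const_def subst_single)

lemma IL_subst: "IL k F \<Longrightarrow> IL k (subst a b F)"
  unfolding IL_def subst_def lookup_pmap by (auto intro: Fk_ideal_sum)

lemma good_subst:
  assumes "a \<in> {1..k}" "b \<in> {1..k}" "good k F"
  shows "good k (subst a b F)"
proof (rule goodI)
  fix e assume "e \<in> Poly_Mapping.keys (subst a b F)"
  then obtain f where f: "f \<in> Poly_Mapping.keys F" "e = sb a b f"
    using keys_pmap[of "sb a b" "\<lambda>x. x" F] unfolding subst_def by blast
  have "Poly_Mapping.keys e \<subseteq> Poly_Mapping.keys f \<union> {b}"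
  proof
    fix x assume "x \<in> Poly_Mapping.keys e"
    then show "x \<in> Poly_Mapping.keys f \<union> {b}"
      using f(2) by (auto simp: in_keys_iff lookup_sb split: if_splits)
  qed
  then show "Poly_Mapping.keys e \<subseteq> {1..k}"
    using good_keys[OF assms(3) f(1)] assms(2) by blast
next
  fix e show "in_Fk k (Poly_Mapping.lookup (subst a b F) e)"
    unfolding subst_def lookup_pmap by (intro in_Fk_sum good_lookup[OF assms(3)])
qed

definition cact :: "(nat \<Rightarrow> nat) \<Rightarrow> lpoly \<Rightarrow> lpoly" where
  "cact \<tau> F = pmap (\<lambda>x. x) (act_d \<tau>) F"

lemma lookup_cact: "Poly_Mapping.lookup (cact \<tau> F) e = act_d \<tau> (Poly_Mapping.lookup F e)"
proof -
  have "{f \<in> Poly_Mapping.keys F. f = e} = (if e \<in> Poly_Mapping.keys F then {e} else {})" by auto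
  then show ?thesis unfolding cact_def lookup_pmap by (auto simp: in_keys_iff)
qed

lemma cact_diff: "cact \<tau> (F - G) = cact \<tau> F - cact \<tau> G"
  unfolding cact_def by (rule pmap_diff) (auto simp: act_d_add)

lemma cact_mult: "cact \<tau> (F * G) = cact \<tau> F * cact \<tau> G"
  unfolding cact_def by (rule pmap_mult) (auto simp: act_d_add act_d_mult)

lemma cact_const [simp]: "cact \<tau> (const c) = const (act_d \<tau> c)"
  by (simp add: cact_def const_def pmap_single)

lemma lookup_act_zexp:
  assumes "bij \<sigma>"
  shows "Poly_Mapping.lookup (act_zexp \<sigma> e) x = Poly_Mapping.lookup e (inv \<sigma> x)"
proof -
  have "{f \<in> Poly_Mapping.keys e. \<sigma> f = x} = (if inv \<sigma> x \<in> Poly_Mapping.keys e then {inv \<sigma> x} else {})"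
    using assms bij_is_inj[OF assms] bij_is_surj[OF assms] by (auto simp: surj_f_inv_f inv_f_f)
  then show ?thesis unfolding act_zexp_pmap lookup_pmap by (auto simp: in_keys_iff)
qed

lemma sb_act_transpose: "sb a b (act_zexp (Transposition.transpose a b) e) = sb a b e"
proof (rule poly_mapping_eqI)
  fix x
  have bij: "bij (Transposition.transpose a b)" by simp
  have inv: "inv (Transposition.transpose a b) = Transposition.transpose a b"
    by (simp add: inv_unique_comp)
  show "Poly_Mapping.lookup (sb a b (act_zexp (Transposition.transpose a b) e)) x = Poly_Mapping.lookup (sb a b e) x"
    unfolding lookup_sb lookup_act_zexp[OF bij] inv
    by (cases "x = a"; cases "x = b") simp_all
qed

lemma subst_act_transpose:
  "subst a b (act (Transposition.transpose a b) F) = cact (Transposition.transpose a b) (subst a b F)"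
proof -
  have "subst a b (act (Transposition.transpose a b) F) =
     pmap (sb a b \<circ> act_zexp (Transposition.transpose a b)) ((\<lambda>x. x) \<circ> act_d (Transposition.transpose a b)) F"
    unfolding subst_def act_pmap by (rule pmap_comp) auto
  also have "\<dots> = pmap ((\<lambda>x. x) \<circ> sb a b) (act_d (Transposition.transpose a b) \<circ> (\<lambda>x. x)) F"
    by (rule pmap_cong) (auto simp: sb_act_transpose)
  also have "\<dots> = cact (Transposition.transpose a b) (subst a b F)"
    unfolding subst_def cact_def by (rule pmap_comp[symmetric]) (auto simp: act_d_add)
  finally show ?thesis .
qed

section \<open>Non-zero-divisors\<close>

lemma zvar_single: "zvar x = Poly_Mapping.single (Poly_Mapping.single x 1) 1"
  by (simp add: zvar_def)

lemma lookup_zvar_mult: "Poly_Mapping.lookup (zvar x * G) e = Poly_Mapping.lookup G (e - Poly_Mapping.single x 1)"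
  unfolding zvar_def by (simp add: lookup_single_mult)

lemma ND:
  assumes "x \<noteq> y" "IL k ((zvar x - zvar y) * G)"
  shows "IL k G"
  unfolding IL_def
proof
  fix f
  let ?w = "\<lambda>m::nat. Poly_Mapping.single x (int m) - Poly_Mapping.single y (int m)"
  have step: "Poly_Mapping.lookup G g - Poly_Mapping.lookup G (g + ?w 1) \<in> Fk_ideal k" for g
  proof -
    have "Poly_Mapping.lookup ((zvar x - zvar y) * G) (g + Poly_Mapping.single x 1) \<in> Fk_ideal k"
      using assms(2) by (simp add: IL_def)
    moreover have "Poly_Mapping.lookup ((zvar x - zvar y) * G) e = Poly_Mapping.lookup (zvar x * G) e - Poly_Mapping.lookup (zvar y * G) e" for e
      by (simp only: left_diff_distrib lookup_minus)
    moreover have "g + Poly_Mapping.single x 1 - Poly_Mapping.single y 1 = g + ?w 1" by simp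
    ultimately show ?thesis
      by (simp only: lookup_zvar_mult add_diff_cancel)
  qed
  have iter: "Poly_Mapping.lookup G f - Poly_Mapping.lookup G (f + ?w m) \<in> Fk_ideal k" for m
  proof (induction m)
    case 0 then show ?case by (simp add: Fk_ideal.zero)
  next
    case (Suc m)
    have eq: "f + ?w m + ?w 1 = f + ?w (Suc m)"
      by (simp add: single_add algebra_simps)
    have "Poly_Mapping.lookup G f - Poly_Mapping.lookup G (f + ?w (Suc m)) =
      (Poly_Mapping.lookup G f - Poly_Mapping.lookup G (f + ?w m)) +
      (Poly_Mapping.lookup G (f + ?w m) - Poly_Mapping.lookup G (f + ?w m + ?w 1))"
      by (simp only: eq) simp
    then show ?case
      using Fk_ideal.add[OF Suc step[of "f + ?w m"]] by simp
  qed
  have inj: "inj (\<lambda>m. f + ?w m)"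
  proof (rule injI)
    fix m1 m2 assume "f + ?w m1 = f + ?w m2"
    then have "Poly_Mapping.lookup (f + ?w m1) x = Poly_Mapping.lookup (f + ?w m2) x" by simp
    then show "m1 = m2" using assms(1) by (simp add: lookup_add lookup_minus lookup_single)
  qed
  have "\<not> range (\<lambda>m. f + ?w m) \<subseteq> Poly_Mapping.keys G"
    using inj finite_keys[of G] by (metis finite_imageD finite_subset infinite_UNIV_nat)
  then obtain m where "f + ?w m \<notin> Poly_Mapping.keys G" by auto
  then have "Poly_Mapping.lookup G (f + ?w m) = 0" by (simp add: in_keys_iff)
  then show "Poly_Mapping.lookup G f \<in> Fk_ideal k" using iter[of m] by simp
qed

lemma NDprod:
  assumes "finite P" "\<And>p. p \<in> P \<Longrightarrow> g p \<noteq> h p"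
    and "IL k ((\<Prod>p\<in>P. zvar (g p) - zvar (h p)) * G)"
  shows "IL k G"
  using assms
proof (induction P arbitrary: G rule: finite_induct)
  case empty then show ?case by simp
next
  case (insert p P)
  have "IL k ((zvar (g p) - zvar (h p)) * ((\<Prod>p\<in>P. zvar (g p) - zvar (h p)) * G))"
    using insert by (simp add: mult.assoc)
  then have "IL k ((\<Prod>p\<in>P. zvar (g p) - zvar (h p)) * G)"
    using ND insert by blast
  then show ?case using insert by blast
qed

definition mon :: "(nat \<Rightarrow>\<^sub>0 int) \<Rightarrow> lpoly" where
  "mon e = Poly_Mapping.single e 1"

lemma mon_add: "mon (a + b) = mon a * mon b"
  by (simp add: mon_def mult_single)

lemma mon_zero [simp]: "mon 0 = 1"
  by (simp add: mon_def)

lemma zvar_mono: "zvar x = mon (Poly_Mapping.single x 1)"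
  by (simp add: zvar_def mon_def)

lemma good_mon: "Poly_Mapping.keys e \<subseteq> {1..k} \<Longrightarrow> good k (mon e)"
  unfolding mon_def by (rule good_single) auto

lemma good_mon_single: "x \<in> {1..k} \<Longrightarrow> good k (mon (Poly_Mapping.single x m))"
  by (rule good_mon) auto

lemma single_const_mon: "Poly_Mapping.single e c = const c * mon e"
  by (simp add: const_def mon_def mult_single)

lemma geo_nat:
  assumes "x \<in> {1..k}" "y \<in> {1..k}"
  shows "\<exists>H. good k H \<and> mon (Poly_Mapping.single x (int n)) - mon (Poly_Mapping.single y (int n)) = (zvar x - zvar y) * H"
proof (induction n)
  case 0 then show ?case by (intro exI[of _ 0]) simp
next
  case (Suc n)
  then obtain H where H: "good k H" "mon (Poly_Mapping.single x (int n)) - mon (Poly_Mapping.single y (int n)) = (zvar x - zvar y) * H"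
    by blast
  have sx: "mon (Poly_Mapping.single x (int (Suc n))) = mon (Poly_Mapping.single x (int n)) * zvar x"
    by (simp add: zvar_mono mon_add[symmetric] single_add[symmetric] add.commute)
  have sy: "mon (Poly_Mapping.single y (int (Suc n))) = mon (Poly_Mapping.single y (int n)) * zvar y"
    by (simp add: zvar_mono mon_add[symmetric] single_add[symmetric] add.commute)
  have "mon (Poly_Mapping.single x (int (Suc n))) - mon (Poly_Mapping.single y (int (Suc n))) =
     (mon (Poly_Mapping.single x (int n)) - mon (Poly_Mapping.single y (int n))) * zvar x +
     mon (Poly_Mapping.single y (int n)) * (zvar x - zvar y)"
    unfolding sx sy by (simp add: algebra_simps)
  also have "\<dots> = (zvar x - zvar y) * (H * zvar x + mon (Poly_Mapping.single y (int n)))"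
    unfolding H(2) by (simp add: algebra_simps)
  finally show ?case
    using H(1) assms by (intro exI[of _ "H * zvar x + mon (Poly_Mapping.single y (int n))"])
      (auto intro!: good_add good_mult good_zvar good_mon_single)
qed

lemma geo_int:
  assumes "x \<in> {1..k}" "y \<in> {1..k}"
  shows "\<exists>H. good k H \<and> mon (Poly_Mapping.single x m) - mon (Poly_Mapping.single y m) = (zvar x - zvar y) * H"
proof (cases "m \<ge> 0")
  case True
  then obtain n where "m = int n" by (metis nonneg_eq_int)
  then show ?thesis using geo_nat[OF assms] by blast
next
  case False
  obtain n where n: "m = - int n" using False by (intro that[of "nat (- m)"]) simp
  obtain H where H: "good k H" "mon (Poly_Mapping.single x (int n)) - mon (Poly_Mapping.single y (int n)) = (zvar x - zvar y) * H"
    using geo_nat[OF assms] by blast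
  let ?X = "mon (Poly_Mapping.single x (- int n))" and ?Y = "mon (Poly_Mapping.single y (- int n))"
  have ix: "?X * mon (Poly_Mapping.single x (int n)) = 1"
    by (simp add: mon_add[symmetric] single_add[symmetric])
  have iy: "?Y * mon (Poly_Mapping.single y (int n)) = 1"
    by (simp add: mon_add[symmetric] single_add[symmetric])
  have "?X - ?Y = - (?X * ?Y) * (mon (Poly_Mapping.single x (int n)) - mon (Poly_Mapping.single y (int n)))"
  proof -
    have "?X * ?Y * mon (Poly_Mapping.single x (int n)) = ?Y * (?X * mon (Poly_Mapping.single x (int n)))"
      by (simp only: ac_simps)
    then have 1: "?X * ?Y * mon (Poly_Mapping.single x (int n)) = ?Y" using ix by (simp only: mult_1_right)
    have "?X * ?Y * mon (Poly_Mapping.single y (int n)) = ?X * (?Y * mon (Poly_Mapping.single y (int n)))"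
      by (simp only: ac_simps)
    then have 2: "?X * ?Y * mon (Poly_Mapping.single y (int n)) = ?X" using iy by (simp only: mult_1_right)
    have "- (?X * ?Y) * (mon (Poly_Mapping.single x (int n)) - mon (Poly_Mapping.single y (int n))) =
       ?X * ?Y * mon (Poly_Mapping.single y (int n)) - ?X * ?Y * mon (Poly_Mapping.single x (int n))"
      by (simp add: algebra_simps)
    also have "\<dots> = ?X - ?Y" by (simp only: 1 2)
    finally show ?thesis by simp
  qed
  also have "\<dots> = (zvar x - zvar y) * (- (?X * ?Y) * H)"
    unfolding H(2) by (simp add: algebra_simps)
  finally show ?thesis
    using H(1) assms n by (intro exI[of _ "- (?X * ?Y) * H"])
      (auto intro!: good_uminus good_mult good_mon_single)
qed

lemma geo_mono:
  assumes "x \<in> {1..k}" "y \<in> {1..k}" "Poly_Mapping.keys e \<subseteq> {1..k}"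
  shows "\<exists>H. good k H \<and> mon e - mon (sb x y e) = (zvar x - zvar y) * H"
proof -
  define m where "m = Poly_Mapping.lookup e x"
  define r where "r = e - Poly_Mapping.single x m"
  have e: "e = r + Poly_Mapping.single x m" by (simp add: r_def)
  have se: "sb x y e = r + Poly_Mapping.single y m" by (simp add: sb_def r_def m_def algebra_simps)
  have "Poly_Mapping.keys r \<subseteq> Poly_Mapping.keys e"
    by (auto simp: r_def m_def in_keys_iff lookup_minus lookup_single when_def split: if_splits)
  then have gr: "good k (mon r)" using assms(3) by (intro good_mon) blast
  obtain H where H: "good k H" "mon (Poly_Mapping.single x m) - mon (Poly_Mapping.single y m) = (zvar x - zvar y) * H"
    using geo_int[OF assms(1,2)] by blast
  have "mon e - mon (sb x y e) = mon r * (mon (Poly_Mapping.single x m) - mon (Poly_Mapping.single y m))"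
    by (subst (1) e, subst se) (simp add: mon_add algebra_simps)
  also have "\<dots> = (zvar x - zvar y) * (mon r * H)"
    unfolding H(2) by (simp add: algebra_simps)
  finally show ?thesis using gr H(1) by (intro exI[of _ "mon r * H"]) (auto intro: good_mult)
qed

lemma exact_div:
  assumes "x \<in> {1..k}" "y \<in> {1..k}" "good k F"
  shows "\<exists>Q. good k Q \<and> F - subst x y F = (zvar x - zvar y) * Q"
proof -
  have "\<forall>e\<in>Poly_Mapping.keys F. \<exists>H. good k H \<and> mon e - mon (sb x y e) = (zvar x - zvar y) * H"
    using geo_mono[OF assms(1,2)] good_keys[OF assms(3)] by blast
  then obtain H where H: "\<And>e. e \<in> Poly_Mapping.keys F \<Longrightarrow> good k (H e) \<and> mon e - mon (sb x y e) = (zvar x - zvar y) * H e"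
    by metis
  have F: "F = (\<Sum>e\<in>Poly_Mapping.keys F. const (Poly_Mapping.lookup F e) * mon e)"
    by (subst poly_mapping_sum_singles) (simp add: single_const_mon)
  have sF: "subst x y F = (\<Sum>e\<in>Poly_Mapping.keys F. const (Poly_Mapping.lookup F e) * mon (sb x y e))"
    by (subst (1) F) (simp add: subst_sum subst_mult mon_def subst_single)
  have "F - subst x y F = (\<Sum>e\<in>Poly_Mapping.keys F. const (Poly_Mapping.lookup F e) * (mon e - mon (sb x y e)))"
    by (subst (1) F, subst sF) (simp add: sum_subtractf algebra_simps)
  also have "\<dots> = (zvar x - zvar y) * (\<Sum>e\<in>Poly_Mapping.keys F. const (Poly_Mapping.lookup F e) * H e)"
    by (simp add: H sum_distrib_left algebra_simps)
  finally show ?thesis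
    using H assms(3) by (intro exI[of _ "\<Sum>e\<in>Poly_Mapping.keys F. const (Poly_Mapping.lookup F e) * H e"])
      (auto intro!: good_sum good_mult good_const good_lookup)
qed

section \<open>Divisibility by the Vandermonde product\<close>

definition Vp :: "(nat \<times> nat) set \<Rightarrow> lpoly" where
  "Vp P = (\<Prod>p\<in>P. zvar (snd p) - zvar (fst p))"

lemma finite_pairs: "finite (pairs k)"
proof -
  have "pairs k \<subseteq> {1..k} \<times> {1..k}" by (auto simp: pairs_def)
  then show ?thesis by (rule finite_subset) simp
qed

lemma div_gen:
  assumes F: "good k F" and S: "\<And>a b. (a, b) \<in> pairs k \<Longrightarrow> IL k (subst a b F)"
    and P: "P \<subseteq> pairs k"
  shows "\<exists>Q. good k Q \<and> IL k (F - Vp P * Q)"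
proof -
  have "finite P" using P finite_pairs by (rule finite_subset)
  then show ?thesis using P
  proof (induction P rule: finite_induct)
    case empty
    show ?case using F by (intro exI[of _ F]) (simp add: Vp_def)
  next
    case (insert p P)
    obtain a b where p: "p = (a, b)" by (cases p)
    have ab: "(a, b) \<in> pairs k" using insert p by auto
    then have ab': "a \<in> {1..k}" "b \<in> {1..k}" "a < b" by (auto simp: pairs_def)
    obtain Q where Q: "good k Q" "IL k (F - Vp P * Q)" using insert by auto
    have A: "IL k (subst a b F - subst a b (Vp P) * subst a b Q)"
      using IL_subst[OF Q(2)] by (simp add: subst_diff subst_mult)
    have "IL k (subst a b F - (subst a b F - subst a b (Vp P) * subst a b Q))"
      by (rule IL_diff[OF S[OF ab] A])
    then have "IL k (subst a b (Vp P) * subst a b Q)" by simp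
    moreover define s where "s i = (if i = a then b else i)" for i
    have "subst a b (Vp P) = (\<Prod>q\<in>P. zvar (s (snd q)) - zvar (s (fst q)))"
      by (simp add: Vp_def subst_prod subst_diff s_def)
    ultimately have "IL k ((\<Prod>q\<in>P. zvar (s (snd q)) - zvar (s (fst q))) * subst a b Q)" by simp
    moreover have "s (snd q) \<noteq> s (fst q)" if "q \<in> P" for q
    proof -
      have q: "q \<in> pairs k" "q \<noteq> (a, b)" using that insert p by auto
      then show ?thesis using ab' by (cases q) (auto simp: s_def pairs_def)
    qed
    ultimately have ILs: "IL k (subst a b Q)"
      using NDprod[of P "\<lambda>q. s (snd q)" "\<lambda>q. s (fst q)" k "subst a b Q"] insert(1) by blast
    obtain Q' where Q': "good k Q'" "Q - subst a b Q = (zvar a - zvar b) * Q'"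
      using exact_div[OF ab'(1,2) Q(1)] by blast
    have Vins: "Vp (insert p P) = (zvar b - zvar a) * Vp P"
      using insert p by (simp add: Vp_def)
    have "F - Vp (insert p P) * (- Q') = (F - Vp P * Q) + Vp P * subst a b Q"
    proof -
      have "Vp (insert p P) * (- Q') = Vp P * ((zvar a - zvar b) * Q')"
        unfolding Vins by (simp add: algebra_simps)
      also have "\<dots> = Vp P * Q - Vp P * subst a b Q" unfolding Q'(2)[symmetric] by (simp add: algebra_simps)
      finally show ?thesis by simp
    qed
    moreover have "IL k ((F - Vp P * Q) + Vp P * subst a b Q)"
      by (intro IL_add Q(2) IL_mult_left ILs)
    ultimately have "IL k (F - Vp (insert p P) * (- Q'))" by (simp only:)
    then show ?case using Q'(1) good_uminus by blast
  qed
qed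

definition V :: "nat \<Rightarrow> lpoly" where "V k = Vp (pairs k)"

definition invs :: "nat \<Rightarrow> (nat \<Rightarrow> nat) \<Rightarrow> (nat \<times> nat) set" where
  "invs k \<sigma> = {p \<in> pairs k. \<sigma> (snd p) < \<sigma> (fst p)}"

definition eps :: "nat \<Rightarrow> (nat \<Rightarrow> nat) \<Rightarrow> lpoly" where
  "eps k \<sigma> = (-1) ^ card (invs k \<sigma>)"

lemma eps_sq: "eps k \<sigma> * eps k \<sigma> = 1"
  by (simp add: eps_def power_mult_distrib[symmetric] power_add[symmetric] flip: power_add) 

lemma gp_pairs:
  assumes "\<sigma> permutes {1..k}" "p \<in> pairs k"
  shows "gp \<sigma> p \<in> pairs k"
proof -
  have "fst p \<in> {1..k}" "snd p \<in> {1..k}" "fst p \<noteq> snd p" using assms(2) by (auto simp: pairs_def)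
  then have "\<sigma> (fst p) \<in> {1..k}" "\<sigma> (snd p) \<in> {1..k}" "\<sigma> (fst p) \<noteq> \<sigma> (snd p)"
    using perm_range[OF assms(1)] permutes_inj[OF assms(1)] by (auto simp: inj_eq)
  then show ?thesis by (auto simp: gp_def pairs_def min_def max_def)
qed

lemma gp_inj:
  assumes "\<sigma> permutes {1..k}"
  shows "inj_on (gp \<sigma>) (pairs k)"
proof
  fix p q assume p: "p \<in> pairs k" and q: "q \<in> pairs k" and eq: "gp \<sigma> p = gp \<sigma> q"
  have inj: "inj \<sigma>" using permutes_inj[OF assms] .
  have gs: "{fst (gp \<sigma> r), snd (gp \<sigma> r)} = \<sigma> ` {fst r, snd r}" for r
    by (auto simp: gp_def min_def max_def)
  from eq have "\<sigma> ` {fst p, snd p} = \<sigma> ` {fst q, snd q}"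
    using gs[of p] gs[of q] by simp
  then have "{fst p, snd p} = {fst q, snd q}"
    by (rule iffD1[OF inj_image_eq_iff[OF inj]])
  then show "p = q" using p q by (cases p; cases q) (auto simp: pairs_def doubleton_eq_iff)
qed

lemma gp_bij:
  assumes "\<sigma> permutes {1..k}"
  shows "bij_betw (gp \<sigma>) (pairs k) (pairs k)"
proof -
  have sub: "gp \<sigma> ` pairs k \<subseteq> pairs k" using gp_pairs[OF assms] by blast
  have "card (gp \<sigma> ` pairs k) = card (pairs k)" using card_image[OF gp_inj[OF assms]] .
  then have "gp \<sigma> ` pairs k = pairs k" using sub finite_pairs by (metis card_subset_eq)
  then show ?thesis using gp_inj[OF assms] by (simp add: bij_betw_def)
qed

lemma prod_if_minus_one:
  "finite A \<Longrightarrow> (\<Prod>p\<in>A. if P p then - 1 else (1::'a::comm_ring_1)) = (- 1) ^ card {p \<in> A. P p}"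
proof -
  assume "finite A"
  have "(\<Prod>p\<in>A. if P p then - 1 else (1::'a)) = (\<Prod>p\<in>{p \<in> A. P p}. - 1)"
    by (rule prod.mono_neutral_cong_right) (use \<open>finite A\<close> in auto)
  then show ?thesis by simp
qed

lemma act_V:
  assumes \<sigma>: "\<sigma> permutes {1..k}"
  shows "act \<sigma> (V k) = eps k \<sigma> * V k"
proof -
  let ?f = "\<lambda>q. zvar (snd q) - zvar (fst q)"
  have "act \<sigma> (V k) = (\<Prod>p\<in>pairs k. zvar (\<sigma> (snd p)) - zvar (\<sigma> (fst p)))"
    by (simp add: V_def Vp_def act_prod act_diff)
  also have "\<dots> = (\<Prod>p\<in>pairs k. (if \<sigma> (snd p) < \<sigma> (fst p) then - 1 else 1) * ?f (gp \<sigma> p))"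
  proof (rule prod.cong[OF refl])
    fix p assume "p \<in> pairs k"
    show "zvar (\<sigma> (snd p)) - zvar (\<sigma> (fst p)) = (if \<sigma> (snd p) < \<sigma> (fst p) then - 1 else 1) * ?f (gp \<sigma> p)"
      by (auto simp: gp_def min_def max_def)
  qed
  also have "\<dots> = (\<Prod>p\<in>pairs k. if \<sigma> (snd p) < \<sigma> (fst p) then - 1 else 1) * (\<Prod>p\<in>pairs k. ?f (gp \<sigma> p))"
    by (rule prod.distrib)
  also have "(\<Prod>p\<in>pairs k. ?f (gp \<sigma> p)) = (\<Prod>q\<in>pairs k. ?f q)"
    using prod.reindex_bij_betw[OF gp_bij[OF \<sigma>], of ?f] .
  also have "(\<Prod>p\<in>pairs k. if \<sigma> (snd p) < \<sigma> (fst p) then - 1 else (1::lpoly)) = eps k \<sigma>"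
    by (simp add: prod_if_minus_one finite_pairs eps_def invs_def)
  finally show ?thesis by (simp add: V_def Vp_def)
qed

lemma invs_transpose_set:
  fixes a b k :: nat
  assumes "1 \<le> a" "a < b" "b \<le> k"
  shows "invs k (Transposition.transpose a b) =
    insert (a, b) ((\<lambda>c. (a, c)) ` {a<..<b} \<union> (\<lambda>c. (c, b)) ` {a<..<b})"
  unfolding invs_def using assms by (auto simp: pairs_def transpose_def split: if_splits)

lemma card_invs_transpose:
  fixes a b k :: nat
  assumes "1 \<le> a" "a < b" "b \<le> k"
  shows "card (invs k (Transposition.transpose a b)) = Suc (2 * (b - a - 1))"
proof -
  let ?A = "(\<lambda>c. (a, c)) ` {a<..<b}" and ?B = "(\<lambda>c. (c, b)) ` {a<..<b}"
  have cA: "card ?A = b - a - 1" by (subst card_image) (auto simp: inj_on_def)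
  have cB: "card ?B = b - a - 1" by (subst card_image) (auto simp: inj_on_def)
  have disj: "?A \<inter> ?B = {}" by auto
  have nin: "(a, b) \<notin> ?A \<union> ?B" by auto
  have "card (insert (a, b) (?A \<union> ?B)) = Suc (card (?A \<union> ?B))"
    using nin by (simp add: card_insert_if)
  also have "card (?A \<union> ?B) = card ?A + card ?B"
    using disj by (simp add: card_Un_disjoint)
  finally show ?thesis using invs_transpose_set[OF assms] cA cB by simp
qed

lemma eps_transpose:
  assumes "1 \<le> a" "a < b" "b \<le> k"
  shows "eps k (Transposition.transpose a b) = - 1"
  unfolding eps_def card_invs_transpose[OF assms] by simp

lemma zvar_inj: "zvar i = zvar j \<Longrightarrow> i = j"
proof -
  assume eq: "zvar i = zvar j"
  have "Poly_Mapping.single i (1::int) = Poly_Mapping.single j 1"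
    using eq unfolding zvar_def by (metis lookup_single_eq lookup_single_not_eq zero_neq_one)
  then show "i = j" by (metis lookup_single_eq lookup_single_not_eq zero_neq_one)
qed

lemma V_nonzero: "V k \<noteq> 0"
proof -
  have "\<forall>p\<in>pairs k. zvar (snd p) - zvar (fst p) \<noteq> 0"
    using zvar_inj by (fastforce simp: pairs_def)
  then show ?thesis unfolding V_def Vp_def by (simp add: finite_pairs)
qed

lemma act_eps [simp]: "act \<tau> (eps k \<sigma>) = eps k \<sigma>"
  by (simp add: eps_def act_power act_uminus)

lemma eps_comp_transpose:
  assumes \<sigma>: "\<sigma> permutes {1..k}" and ab: "1 \<le> a" "a < b" "b \<le> k"
  shows "eps k (Transposition.transpose a b \<circ> \<sigma>) = - eps k \<sigma>"
proof -
  let ?t = "Transposition.transpose a b"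
  have t: "?t permutes {1..k}" using ab by (intro permutes_swap_id) auto
  have "eps k (?t \<circ> \<sigma>) * V k = act (?t \<circ> \<sigma>) (V k)"
    using act_V[OF permutes_compose[OF \<sigma> t]] by simp
  also have "\<dots> = act ?t (act \<sigma> (V k))" by (simp add: act_comp)
  also have "\<dots> = eps k \<sigma> * (eps k ?t * V k)" by (simp add: act_V[OF \<sigma>] act_V[OF t] act_mult)
  also have "\<dots> = (- eps k \<sigma>) * V k" by (simp add: eps_transpose[OF ab])
  finally have "eps k (?t \<circ> \<sigma>) * V k = (- eps k \<sigma>) * V k" .
  then show ?thesis using V_nonzero[of k] by (rule mult_right_cancel[THEN iffD1, rotated])
qed

lemma act_d_id_Fk: "in_Fk k P \<Longrightarrow> act_d id P = P"
proof -
  assume P: "in_Fk k P"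
  have "act_dmon id m = m" if "m \<in> Poly_Mapping.keys P" for m
  proof -
    have "\<forall>p\<in>Poly_Mapping.keys m. fst p < snd p" using P that by (auto simp: in_Fk_def)
    then have "act_dmon id m = pmap (\<lambda>x. x) (\<lambda>x. x) m"
      unfolding act_dmon_pmap by (intro pmap_cong) (auto simp: gp_def)
    then show ?thesis by (simp add: pmap_id)
  qed
  then have "act_d id P = pmap (\<lambda>x. x) (\<lambda>x. x) P"
    unfolding act_d_pmap by (intro pmap_cong) auto
  then show ?thesis by (simp add: pmap_id)
qed

lemma act_d_transpose_invol:
  assumes "in_Fk k P"
  shows "act_d (Transposition.transpose a b) (act_d (Transposition.transpose a b) P) = P"
  using act_d_id_Fk[OF assms] by (simp add: act_d_comp)

definition zf :: "nat \<Rightarrow> nat \<Rightarrow> lpoly" where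
  "zf i j = zvar j - zvar i + const (Delta i j) * zvar i"

definition N0 :: "nat \<Rightarrow> (nat \<Rightarrow> int) \<Rightarrow> lpoly" where
  "N0 k n = zmono k n * (\<Prod>p\<in>pairs k. zf (fst p) (snd p))"

definition Perms :: "nat \<Rightarrow> (nat \<Rightarrow> nat) set" where
  "Perms k = {\<sigma>. \<sigma> permutes {1..k}}"

definition Alt :: "nat \<Rightarrow> (nat \<Rightarrow> int) \<Rightarrow> lpoly" where
  "Alt k n = (\<Sum>\<sigma>\<in>Perms k. eps k \<sigma> * act \<sigma> (N0 k n))"

lemma finite_Perms: "finite (Perms k)"
  unfolding Perms_def by (rule finite_permutations) simp

lemma act_zf [simp]: "act \<sigma> (zf i j) = zf (\<sigma> i) (\<sigma> j)"
  by (simp add: zf_def act_add act_diff act_mult)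

lemma keys_zexp: "Poly_Mapping.keys (zexp k n) \<subseteq> {1..k}"
proof -
  have "Poly_Mapping.keys (zexp k n) \<subseteq> (\<Union>i\<in>{1..k}. Poly_Mapping.keys (Poly_Mapping.single i (n i)))"
    unfolding zexp_def by (rule keys_sum)
  also have "\<dots> \<subseteq> {1..k}" by auto
  finally show ?thesis .
qed

lemma good_zmono: "good k (zmono k n)"
  unfolding zmono_def by (rule good_single[OF keys_zexp]) simp

lemma good_zf: "i \<in> {1..k} \<Longrightarrow> j \<in> {1..k} \<Longrightarrow> i \<noteq> j \<Longrightarrow> good k (zf i j)"
  unfolding zf_def by (intro good_add good_diff good_mult good_zvar good_const in_Fk_Delta)

lemma good_N0: "good k (N0 k n)"
  unfolding N0_def by (intro good_mult good_zmono good_prod good_zf) (auto simp: pairs_def)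

lemma good_Alt: "good k (Alt k n)"
  unfolding Alt_def eps_def
  by (intro good_sum good_mult good_power good_uminus good_one good_act good_N0) (auto simp: Perms_def)

lemma subst_power: "subst a b (x ^ m) = subst a b x ^ m"
  by (induction m) (auto simp: subst_mult)

lemma subst_eps [simp]: "subst a b (eps k \<sigma>) = eps k \<sigma>"
  by (simp add: eps_def subst_power subst_uminus)

lemma IL_antisym:
  assumes ab: "a \<in> {1..k}" "b \<in> {1..k}" "a \<noteq> b" and W: "good k W"
  shows "IL k (const (Delta a b) * (W - cact (Transposition.transpose a b) W))"
  unfolding IL_def
proof
  fix e
  let ?t = "Transposition.transpose a b"
  let ?P = "Poly_Mapping.lookup W e - act_d ?t (Poly_Mapping.lookup W e)"
  have t: "?t permutes {1..k}" using ab by (intro permutes_swap_id) auto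
  have inP: "in_Fk k ?P" using good_lookup[OF W] in_Fk_act_d[OF t] by (intro in_Fk_diff) auto
  have "act_d ?t ?P = act_d ?t (Poly_Mapping.lookup W e) - Poly_Mapping.lookup W e"
    by (simp add: act_d_diff act_d_transpose_invol[OF good_lookup[OF W]])
  then have anti: "act_d ?t ?P = - ?P" by simp
  have "Delta a b * ?P \<in> Fk_ideal k"
    by (rule Fk_ideal.gen[OF ab inP anti])
  then show "Poly_Mapping.lookup (const (Delta a b) * (W - cact ?t W)) e \<in> Fk_ideal k"
    by (simp add: lookup_const_mult lookup_minus lookup_cact)
qed

lemma pair_term:
  assumes \<sigma>: "\<sigma> permutes {1..k}" and ab: "(a, b) \<in> pairs k" and lt: "inv \<sigma> a < inv \<sigma> b"
  shows "IL k (subst a b (eps k \<sigma> * act \<sigma> (N0 k n) +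
      eps k (Transposition.transpose a b \<circ> \<sigma>) * act (Transposition.transpose a b \<circ> \<sigma>) (N0 k n)))"
proof -
  let ?t = "Transposition.transpose a b"
  have ab': "a \<in> {1..k}" "b \<in> {1..k}" "a < b" "1 \<le> a" "b \<le> k" using ab by (auto simp: pairs_def)
  define i0 where "i0 = inv \<sigma> a"
  define j0 where "j0 = inv \<sigma> b"
  have si: "\<sigma> i0 = a" "\<sigma> j0 = b" using permutes_inverses(1)[OF \<sigma>] by (auto simp: i0_def j0_def)
  have ir: "i0 \<in> {1..k}" "j0 \<in> {1..k}"
    using perm_range[OF permutes_inv[OF \<sigma>]] ab'(1,2) by (auto simp: i0_def j0_def)
  have p0: "(i0, j0) \<in> pairs k" using ir lt by (auto simp: pairs_def i0_def j0_def)
  define R where "R = act \<sigma> (zmono k n) * (\<Prod>p\<in>pairs k - {(i0, j0)}. zf (\<sigma> (fst p)) (\<sigma> (snd p)))"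
  have Y: "act \<sigma> (N0 k n) = zf a b * R"
  proof -
    have "act \<sigma> (N0 k n) = act \<sigma> (zmono k n) * (\<Prod>p\<in>pairs k. zf (\<sigma> (fst p)) (\<sigma> (snd p)))"
      by (simp add: N0_def act_mult act_prod)
    also have "(\<Prod>p\<in>pairs k. zf (\<sigma> (fst p)) (\<sigma> (snd p))) =
        zf (\<sigma> i0) (\<sigma> j0) * (\<Prod>p\<in>pairs k - {(i0, j0)}. zf (\<sigma> (fst p)) (\<sigma> (snd p)))"
      using prod.remove[OF finite_pairs p0, of "\<lambda>p. zf (\<sigma> (fst p)) (\<sigma> (snd p))"] by simp
    finally show ?thesis by (simp add: R_def si mult_ac)
  qed
  have goodR: "good k R"
    unfolding R_def
  proof (intro good_mult good_act[OF \<sigma>] good_zmono good_prod good_zf)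
    fix p assume "p \<in> pairs k - {(i0, j0)}"
    then have "fst p \<in> {1..k}" "snd p \<in> {1..k}" "fst p \<noteq> snd p" by (auto simp: pairs_def)
    then show "\<sigma> (fst p) \<in> {1..k}" "\<sigma> (snd p) \<in> {1..k}" "\<sigma> (fst p) \<noteq> \<sigma> (snd p)"
      using perm_range[OF \<sigma>] permutes_inj[OF \<sigma>] by (auto simp: inj_eq)
  qed
  define W where "W = zvar b * subst a b R"
  have goodW: "good k W" unfolding W_def by (intro good_mult good_zvar good_subst goodR ab'(1,2))+
  have sY: "subst a b (act \<sigma> (N0 k n)) = const (Delta a b) * W"
    unfolding Y W_def by (simp add: subst_mult zf_def subst_add subst_diff)
  have t: "?t permutes {1..k}" using ab' by (intro permutes_swap_id) auto
  have "subst a b (eps k \<sigma> * act \<sigma> (N0 k n) + eps k (?t \<circ> \<sigma>) * act (?t \<circ> \<sigma>) (N0 k n)) =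
     eps k \<sigma> * (subst a b (act \<sigma> (N0 k n)) - subst a b (act ?t (act \<sigma> (N0 k n))))"
    by (simp add: eps_comp_transpose[OF \<sigma> ab'(4,3,5)] act_comp subst_add subst_diff subst_uminus subst_mult algebra_simps)
  also have "\<dots> = eps k \<sigma> * (const (Delta a b) * (W - cact ?t W))"
    by (simp add: subst_act_transpose sY cact_mult Delta_sym[of b a] algebra_simps)
  finally show ?thesis
    using IL_antisym[OF ab'(1,2) _ goodW] ab'(3) by (simp add: IL_mult_left)
qed

lemma subst_Alt:
  assumes ab: "(a, b) \<in> pairs k"
  shows "IL k (subst a b (Alt k n))"
proof -
  let ?t = "Transposition.transpose a b"
  have ab': "a \<in> {1..k}" "b \<in> {1..k}" "a < b" using ab by (auto simp: pairs_def)
  have t: "?t permutes {1..k}" using ab' by (intro permutes_swap_id) auto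
  define H where "H = {\<sigma> \<in> Perms k. inv \<sigma> a < inv \<sigma> b}"
  define f where "f \<sigma> = eps k \<sigma> * act \<sigma> (N0 k n)" for \<sigma>
  have invc: "inv (?t \<circ> \<sigma>) = inv \<sigma> \<circ> ?t" if "\<sigma> \<in> Perms k" for \<sigma>
    using that permutes_bij[OF t] by (simp add: Perms_def o_inv_distrib permutes_bij)
  have inj: "inj_on (\<lambda>\<sigma>. ?t \<circ> \<sigma>) H"
  proof (rule inj_onI)
    fix x y assume "?t \<circ> x = ?t \<circ> y"
    then have "?t \<circ> (?t \<circ> x) = ?t \<circ> (?t \<circ> y)" by simp
    then show "x = y" by (simp add: comp_assoc[symmetric])
  qed
  have img: "(\<lambda>\<sigma>. ?t \<circ> \<sigma>) ` H = Perms k - H"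
  proof
    show "(\<lambda>\<sigma>. ?t \<circ> \<sigma>) ` H \<subseteq> Perms k - H"
    proof
      fix \<rho> assume "\<rho> \<in> (\<lambda>\<sigma>. ?t \<circ> \<sigma>) ` H"
      then obtain \<sigma> where s: "\<sigma> \<in> H" "\<rho> = ?t \<circ> \<sigma>" by auto
      then have sP: "\<sigma> \<in> Perms k" by (simp add: H_def)
      then have "\<rho> \<in> Perms k" using s t by (simp add: Perms_def permutes_compose)
      moreover have "inv \<rho> a = inv \<sigma> b" "inv \<rho> b = inv \<sigma> a" using invc[OF sP] s by auto
      ultimately show "\<rho> \<in> Perms k - H" using s by (auto simp: H_def)
    qed
  next
    show "Perms k - H \<subseteq> (\<lambda>\<sigma>. ?t \<circ> \<sigma>) ` H"
    proof
      fix \<rho> assume r: "\<rho> \<in> Perms k - H"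
      then have rP: "\<rho> \<in> Perms k" by simp
      have rp: "\<rho> permutes {1..k}" using rP by (simp add: Perms_def)
      have "inv \<rho> a \<noteq> inv \<rho> b"
      proof
        assume "inv \<rho> a = inv \<rho> b"
        then have "\<rho> (inv \<rho> a) = \<rho> (inv \<rho> b)" by simp
        then show False using ab'(3) permutes_inverses(1)[OF rp] by simp
      qed
      then have lt: "inv \<rho> b < inv \<rho> a" using r by (auto simp: H_def)
      have tr: "?t \<circ> \<rho> \<in> Perms k" using rP t by (simp add: Perms_def permutes_compose)
      have "inv (?t \<circ> \<rho>) a = inv \<rho> b" "inv (?t \<circ> \<rho>) b = inv \<rho> a" using invc[OF rP] by auto
      then have "?t \<circ> \<rho> \<in> H" using tr lt by (simp add: H_def)
      moreover have "\<rho> = ?t \<circ> (?t \<circ> \<rho>)" by (simp add: comp_assoc[symmetric])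
      ultimately show "\<rho> \<in> (\<lambda>\<sigma>. ?t \<circ> \<sigma>) ` H" by blast
    qed
  qed
  have HP: "H \<subseteq> Perms k" by (auto simp: H_def)
  have "Alt k n = (\<Sum>\<sigma>\<in>H. f \<sigma>) + (\<Sum>\<sigma>\<in>Perms k - H. f \<sigma>)"
    unfolding Alt_def f_def using sum.subset_diff[OF HP finite_Perms] by (simp add: add.commute)
  also have "(\<Sum>\<sigma>\<in>Perms k - H. f \<sigma>) = (\<Sum>\<sigma>\<in>H. f (?t \<circ> \<sigma>))"
    unfolding img[symmetric] using sum.reindex[OF inj, of f] by (simp add: comp_def)
  finally have "Alt k n = (\<Sum>\<sigma>\<in>H. f \<sigma> + f (?t \<circ> \<sigma>))" by (simp add: sum.distrib)
  then have "subst a b (Alt k n) = (\<Sum>\<sigma>\<in>H. subst a b (f \<sigma> + f (?t \<circ> \<sigma>)))"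
    by (simp add: subst_sum)
  also have "IL k \<dots>"
  proof (rule IL_sum)
    fix \<sigma> assume "\<sigma> \<in> H"
    then have "\<sigma> permutes {1..k}" "inv \<sigma> a < inv \<sigma> b" by (auto simp: H_def Perms_def)
    then show "IL k (subst a b (f \<sigma> + f (?t \<circ> \<sigma>)))"
      unfolding f_def by (rule pair_term[OF _ ab])
  qed
  finally show ?thesis .
qed

definition topc :: "lpoly \<Rightarrow> (nat \<Rightarrow>\<^sub>0 int) \<Rightarrow> dpoly \<Rightarrow> bool" where
  "topc A \<alpha> c \<longleftrightarrow> (\<forall>e\<in>Poly_Mapping.keys A. e \<le> \<alpha>) \<and> Poly_Mapping.lookup A \<alpha> = c"

lemma topc_le: "topc A \<alpha> c \<Longrightarrow> e \<in> Poly_Mapping.keys A \<Longrightarrow> e \<le> \<alpha>"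
  by (simp add: topc_def)

lemma topc_zero_above: "topc A \<alpha> c \<Longrightarrow> \<alpha> < e \<Longrightarrow> Poly_Mapping.lookup A e = 0"
  by (metis topc_def in_keys_iff leD)

lemma topc_mult:
  assumes A: "topc A \<alpha> c" and B: "topc B \<beta> d"
  shows "topc (A * B) (\<alpha> + \<beta>) (c * d)"
proof -
  have "e \<le> \<alpha> + \<beta>" if e: "e \<in> Poly_Mapping.keys (A * B)" for e
  proof -
    obtain a b where "a \<in> Poly_Mapping.keys A" "b \<in> Poly_Mapping.keys B" "e = a + b"
      using keys_mult[of A B] e by blast
    then show ?thesis using topc_le[OF A] topc_le[OF B] by (simp add: add_mono)
  qed
  moreover have "Poly_Mapping.lookup (A * B) (\<alpha> + \<beta>) = c * d"
  proof -
    have eq: "(Poly_Mapping.lookup A a * Poly_Mapping.lookup B b when \<alpha> + \<beta> = a + b) =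
        (Poly_Mapping.lookup A a * Poly_Mapping.lookup B b when a = \<alpha> \<and> b = \<beta>)"
      if "a \<in> Poly_Mapping.keys A" "b \<in> Poly_Mapping.keys B" for a b
    proof -
      have a: "a \<le> \<alpha>" and b: "b \<le> \<beta>" using topc_le[OF A that(1)] topc_le[OF B that(2)] .
      have "\<alpha> + \<beta> = a + b \<longleftrightarrow> a = \<alpha> \<and> b = \<beta>"
      proof
        assume e: "\<alpha> + \<beta> = a + b"
        show "a = \<alpha> \<and> b = \<beta>"
        proof (rule ccontr)
          assume "\<not> (a = \<alpha> \<and> b = \<beta>)"
          then have "a < \<alpha> \<or> b < \<beta>" using a b by auto
          then have "a + b < \<alpha> + \<beta>" using a b by (auto intro: add_less_le_mono add_le_less_mono)
          then show False using e by simp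
        qed
      qed auto
      then show ?thesis by simp
    qed
    have "Poly_Mapping.lookup (A * B) (\<alpha> + \<beta>) =
       (\<Sum>a\<in>Poly_Mapping.keys A. \<Sum>b\<in>Poly_Mapping.keys B. (Poly_Mapping.lookup A a * Poly_Mapping.lookup B b when a = \<alpha> \<and> b = \<beta>))"
      unfolding lookup_mult_keys by (intro sum.cong refl) (simp add: eq)
    also have "\<dots> = Poly_Mapping.lookup A \<alpha> * Poly_Mapping.lookup B \<beta>"
    proof (cases "\<alpha> \<in> Poly_Mapping.keys A \<and> \<beta> \<in> Poly_Mapping.keys B")
      case True
      let ?X = "Poly_Mapping.lookup A \<alpha> * Poly_Mapping.lookup B \<beta>"
      have "(\<Sum>a\<in>Poly_Mapping.keys A. \<Sum>b\<in>Poly_Mapping.keys B. (Poly_Mapping.lookup A a * Poly_Mapping.lookup B b when a = \<alpha> \<and> b = \<beta>)) =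
         (\<Sum>a\<in>Poly_Mapping.keys A. if a = \<alpha> then (\<Sum>b\<in>Poly_Mapping.keys B. if b = \<beta> then ?X else 0) else 0)"
        by (intro sum.cong refl) (auto simp: when_def)
      also have "\<dots> = ?X" using True by simp
      finally show ?thesis .
    next
      case False
      then have "Poly_Mapping.lookup A \<alpha> * Poly_Mapping.lookup B \<beta> = 0" by (auto simp: in_keys_iff)
      moreover have "\<forall>a\<in>Poly_Mapping.keys A. \<forall>b\<in>Poly_Mapping.keys B. (Poly_Mapping.lookup A a * Poly_Mapping.lookup B b when a = \<alpha> \<and> b = \<beta>) = 0"
        using False by (auto simp: when_def)
      ultimately show ?thesis by simp
    qed
    finally show ?thesis using A B by (simp add: topc_def)
  qed
  ultimately show ?thesis by (simp add: topc_def)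
qed

lemma topc_one: "topc 1 0 1"
  by (simp add: topc_def)

lemma topc_prod:
  assumes "finite I" "\<And>i. i \<in> I \<Longrightarrow> topc (f i) (a i) (c i)"
  shows "topc (\<Prod>i\<in>I. f i) (\<Sum>i\<in>I. a i) (\<Prod>i\<in>I. c i)"
  using assms by (induction I rule: finite_induct) (auto simp: topc_one intro: topc_mult)

lemma topc_single: "topc (Poly_Mapping.single e c) e c"
  by (simp add: topc_def)

lemma topc_mon: "topc (mon e) e 1"
  by (simp add: mon_def topc_single)

lemma topc_zvar: "topc (zvar i) (Poly_Mapping.single i 1) 1"
  by (simp add: zvar_def topc_single)

lemma topc_const_mult: "topc A \<alpha> c \<Longrightarrow> topc (const d * A) \<alpha> (d * c)"
  using topc_mult[of "const d" 0 d A \<alpha> c] by (simp add: const_def topc_single)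

lemma single_less: "i < j \<Longrightarrow> (Poly_Mapping.single j (1::int)) < Poly_Mapping.single i 1"
  unfolding less_poly_mapping.rep_eq less_fun_def
  by (intro exI[of _ i]) (auto simp: lookup_single)

lemma topc_binom:
  assumes "x < y"
  shows "topc (zvar y + const c * zvar x) (Poly_Mapping.single x 1) c"
proof -
  have lt: "Poly_Mapping.single y (1::int) < Poly_Mapping.single x 1" using single_less[OF assms] .
  have "Poly_Mapping.keys (zvar y + const c * zvar x) \<subseteq> {Poly_Mapping.single y 1, Poly_Mapping.single x 1}"
    using keys_add[of "zvar y" "const c * zvar x"] by (auto simp: zvar_def const_def mult_single split: if_split_asm)
  moreover have "Poly_Mapping.lookup (zvar y + const c * zvar x) (Poly_Mapping.single x 1) = c"
    using lt by (auto simp: zvar_def const_def mult_single lookup_add lookup_single when_def)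
  ultimately show ?thesis using lt unfolding topc_def by auto
qed

lemma topc_binom':
  assumes "y < x"
  shows "topc (zvar y + const c * zvar x) (Poly_Mapping.single y 1) 1"
proof -
  have lt: "Poly_Mapping.single x (1::int) < Poly_Mapping.single y 1" using single_less[OF assms] .
  have "Poly_Mapping.keys (zvar y + const c * zvar x) \<subseteq> {Poly_Mapping.single y 1, Poly_Mapping.single x 1}"
    using keys_add[of "zvar y" "const c * zvar x"] by (auto simp: zvar_def const_def mult_single split: if_split_asm)
  moreover have "Poly_Mapping.lookup (zvar y + const c * zvar x) (Poly_Mapping.single y 1) = 1"
    using lt by (auto simp: zvar_def const_def mult_single lookup_add lookup_single when_def)
  ultimately show ?thesis using lt unfolding topc_def by auto
qed

lemma zf_binom: "zf i j = zvar j + const (Delta i j - 1) * zvar i"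
  by (simp add: zf_def const_def single_diff algebra_simps flip: single_one)

definition rho :: "nat \<Rightarrow> (nat \<Rightarrow>\<^sub>0 int)" where
  "rho k = (\<Sum>p\<in>pairs k. Poly_Mapping.single (fst p) 1)"

lemma topc_V: "topc (V k) (rho k) ((-1) ^ card (pairs k))"
proof -
  have "topc (V k) (\<Sum>p\<in>pairs k. Poly_Mapping.single (fst p) 1) (\<Prod>p\<in>pairs k. - 1)"
    unfolding V_def Vp_def
  proof (rule topc_prod[OF finite_pairs])
    fix p assume "p \<in> pairs k"
    then have lt: "fst p < snd p" by (auto simp: pairs_def)
    have c: "const (- 1) = - 1" by (simp add: const_def single_uminus)
    have eq: "zvar (snd p) - zvar (fst p) = zvar (snd p) + const (- 1) * zvar (fst p)"
      by (simp add: c)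
    show "topc (zvar (snd p) - zvar (fst p)) (Poly_Mapping.single (fst p) 1) (- 1)"
      unfolding eq by (rule topc_binom[OF lt])
  qed
  then show ?thesis by (simp add: rho_def)
qed

definition cf :: "(nat \<Rightarrow> nat) \<Rightarrow> nat \<times> nat \<Rightarrow> dpoly" where
  "cf \<sigma> p = (if \<sigma> (fst p) < \<sigma> (snd p) then Delta (\<sigma> (fst p)) (\<sigma> (snd p)) - 1 else 1)"

lemma topc_actN0:
  assumes \<sigma>: "\<sigma> permutes {1..k}"
  shows "topc (act \<sigma> (N0 k n)) (act_zexp \<sigma> (zexp k n) + rho k) (\<Prod>p\<in>pairs k. cf \<sigma> p)"
proof -
  have z: "act \<sigma> (zmono k n) = Poly_Mapping.single (act_zexp \<sigma> (zexp k n)) 1"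
    by (simp add: zmono_def act_pmap pmap_single)
  have P: "topc (\<Prod>p\<in>pairs k. zf (\<sigma> (fst p)) (\<sigma> (snd p)))
     (\<Sum>p\<in>pairs k. Poly_Mapping.single (fst (gp \<sigma> p)) 1) (\<Prod>p\<in>pairs k. cf \<sigma> p)"
  proof (rule topc_prod[OF finite_pairs])
    fix p assume p: "p \<in> pairs k"
    then have "fst p \<noteq> snd p" by (auto simp: pairs_def)
    then have ne: "\<sigma> (fst p) \<noteq> \<sigma> (snd p)" using permutes_inj[OF \<sigma>] by (auto simp: inj_eq)
    show "topc (zf (\<sigma> (fst p)) (\<sigma> (snd p))) (Poly_Mapping.single (fst (gp \<sigma> p)) 1) (cf \<sigma> p)"
    proof (cases "\<sigma> (fst p) < \<sigma> (snd p)")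
      case True
      then show ?thesis using topc_binom[OF True] by (simp add: zf_binom cf_def gp_def)
    next
      case False
      then have "\<sigma> (snd p) < \<sigma> (fst p)" using ne by simp
      then show ?thesis using topc_binom' False by (simp add: zf_binom cf_def gp_def min_def)
    qed
  qed
  have "(\<Sum>p\<in>pairs k. Poly_Mapping.single (fst (gp \<sigma> p)) (1::int)) = rho k"
    unfolding rho_def using sum.reindex_bij_betw[OF gp_bij[OF \<sigma>], of "\<lambda>q. Poly_Mapping.single (fst q) 1"] .
  then have P': "topc (\<Prod>p\<in>pairs k. zf (\<sigma> (fst p)) (\<sigma> (snd p))) (rho k) (\<Prod>p\<in>pairs k. cf \<sigma> p)"
    using P by simp
  have "act \<sigma> (N0 k n) = Poly_Mapping.single (act_zexp \<sigma> (zexp k n)) 1 * (\<Prod>p\<in>pairs k. zf (\<sigma> (fst p)) (\<sigma> (snd p)))"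
    by (simp add: N0_def act_mult act_prod z)
  then show ?thesis using topc_mult[OF topc_single[of "act_zexp \<sigma> (zexp k n)" 1] P'] by simp
qed

lemma lookup_zexp: "Poly_Mapping.lookup (zexp k n) x = (if x \<in> {1..k} then n x else 0)"
proof -
  have "Poly_Mapping.lookup (zexp k n) x = (\<Sum>i\<in>{1..k}. (n i when i = x))"
    unfolding zexp_def lookup_sum lookup_single by (rule refl)
  also have "\<dots> = (if x \<in> {1..k} then n x else 0)"
    by (simp add: when_def)
  finally show ?thesis .
qed

lemma lookup_act_zexp_zexp:
  assumes \<sigma>: "\<sigma> permutes {1..k}"
  shows "Poly_Mapping.lookup (act_zexp \<sigma> (zexp k n)) x = (if x \<in> {1..k} then n (inv \<sigma> x) else 0)"
proof -
  have "inv \<sigma> x \<in> {1..k} \<longleftrightarrow> x \<in> {1..k}"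
    by (rule permutes_in_image[OF permutes_inv[OF \<sigma>]])
  then show ?thesis
    by (simp add: lookup_act_zexp[OF permutes_bij[OF \<sigma>]] lookup_zexp)
qed

lemma less_pm_E:
  assumes "(a :: nat \<Rightarrow>\<^sub>0 int) < b"
  obtains x where "Poly_Mapping.lookup a x < Poly_Mapping.lookup b x" "\<And>y. y < x \<Longrightarrow> Poly_Mapping.lookup a y = Poly_Mapping.lookup b y"
  using assms unfolding less_poly_mapping.rep_eq less_fun_def by blast

lemma act_zexp_le:
  assumes \<sigma>: "\<sigma> permutes {1..k}"
    and dec: "\<And>i j. 1 \<le> i \<Longrightarrow> i \<le> j \<Longrightarrow> j \<le> k \<Longrightarrow> n j \<le> n i"
  shows "act_zexp \<sigma> (zexp k n) \<le> zexp k n"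
proof (rule ccontr)
  let ?w = "act_zexp \<sigma> (zexp k n)" and ?z = "zexp k n" and ?t = "inv \<sigma>"
  assume "\<not> ?w \<le> ?z"
  then have "?z < ?w" by simp
  then have "\<exists>x. Poly_Mapping.lookup ?z x < Poly_Mapping.lookup ?w x \<and> (\<forall>y<x. Poly_Mapping.lookup ?z y = Poly_Mapping.lookup ?w y)"
    unfolding less_poly_mapping.rep_eq less_fun_def by blast
  then obtain x where x: "Poly_Mapping.lookup ?z x < Poly_Mapping.lookup ?w x"
     "\<And>y. y < x \<Longrightarrow> Poly_Mapping.lookup ?z y = Poly_Mapping.lookup ?w y"
    by blast
  have t: "?t permutes {1..k}" using permutes_inv[OF \<sigma>] .
  have xr: "x \<in> {1..k}"
  proof (rule ccontr)
    assume "x \<notin> {1..k}"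
    then have "Poly_Mapping.lookup ?z x = 0" "Poly_Mapping.lookup ?w x = 0"
      by (simp_all only: lookup_zexp lookup_act_zexp_zexp[OF \<sigma>] if_False)
    with x(1) show False by simp
  qed
  have nx: "n x < n (?t x)" using x(1) xr by (simp add: lookup_zexp lookup_act_zexp_zexp[OF \<sigma>])
  have ny: "n (?t y) = n y" if "y \<in> {1..k}" "y < x" for y
    using x(2)[OF that(2)] that(1) by (simp add: lookup_zexp lookup_act_zexp_zexp[OF \<sigma>])
  define S where "S = {i \<in> {1..k}. n x < n i}"
  have S_lt: "i < x" if "i \<in> S" for i
  proof (rule ccontr)
    assume "\<not> i < x"
    then have "n i \<le> n x" using dec[of x i] that xr by (auto simp: S_def)
    then show False using that by (simp add: S_def)
  qed
  have xS: "x \<notin> S" by (simp add: S_def)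
  have img: "?t ` insert x S \<subseteq> S"
  proof
    fix y assume "y \<in> ?t ` insert x S"
    then obtain i where i: "i \<in> insert x S" "y = ?t i" by auto
    show "y \<in> S"
    proof (cases "i = x")
      case True
      have "?t x \<in> {1..k}" by (rule perm_range[OF t xr])
      then show ?thesis using i True nx unfolding S_def by blast
    next
      case False
      then have iS: "i \<in> S" using i by simp
      then have ir: "i \<in> {1..k}" and nxi: "n x < n i" by (auto simp: S_def)
      have "?t i \<in> {1..k}" by (rule perm_range[OF t ir])
      moreover have "n (?t i) = n i" by (rule ny[OF ir S_lt[OF iS]])
      ultimately show ?thesis using i nxi unfolding S_def by simp
    qed
  qed
  have fin: "finite S" by (simp add: S_def)
  have "card (?t ` insert x S) = card (insert x S)"
    by (rule card_image[OF inj_on_subset[OF permutes_inj[OF t] subset_UNIV]])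
  also have "\<dots> = Suc (card S)" using fin xS by simp
  finally have "Suc (card S) \<le> card S" using card_mono[OF fin img] by simp
  then show False by simp
qed

lemma act_zexp_eq_iff:
  assumes \<sigma>: "\<sigma> permutes {1..k}"
  shows "act_zexp \<sigma> (zexp k n) = zexp k n \<longleftrightarrow> (\<forall>x\<in>{1..k}. n (inv \<sigma> x) = n x)"
proof
  assume eq: "act_zexp \<sigma> (zexp k n) = zexp k n"
  show "\<forall>x\<in>{1..k}. n (inv \<sigma> x) = n x"
  proof
    fix x assume "x \<in> {1..k}"
    then show "n (inv \<sigma> x) = n x"
      using arg_cong[OF eq, of "\<lambda>e. Poly_Mapping.lookup e x"]
      by (simp add: lookup_zexp lookup_act_zexp_zexp[OF \<sigma>])
  qed
next
  assume "\<forall>x\<in>{1..k}. n (inv \<sigma> x) = n x"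
  then show "act_zexp \<sigma> (zexp k n) = zexp k n"
    by (intro poly_mapping_eqI) (simp add: lookup_zexp lookup_act_zexp_zexp[OF \<sigma>])
qed

lemma admissible_iff:
  assumes \<tau>: "\<tau> permutes {1..k}"
    and dec: "\<And>i j. 1 \<le> i \<Longrightarrow> i \<le> j \<Longrightarrow> j \<le> k \<Longrightarrow> n j \<le> n i"
  shows "admissible k n \<tau> \<longleftrightarrow> (\<forall>x\<in>{1..k}. n (\<tau> x) = n x)"
proof
  assume all: "\<forall>x\<in>{1..k}. n (\<tau> x) = n x"
  show "admissible k n \<tau>"
    unfolding admissible_def
  proof (intro ballI impI)
    fix i j assume i: "i \<in> {1..k}" and j: "j \<in> {1..k}" and ij: "j < i \<and> \<tau> i < \<tau> j"
    have "n i \<le> n j" using dec[of j i] i j ij by auto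
    moreover have "n (\<tau> j) \<le> n (\<tau> i)" using dec[of "\<tau> i" "\<tau> j"] perm_range[OF \<tau> i] perm_range[OF \<tau> j] ij by auto
    ultimately show "n i = n j" using all i j by auto
  qed
next
  assume adm: "admissible k n \<tau>"
  show "\<forall>x\<in>{1..k}. n (\<tau> x) = n x"
  proof (rule ccontr)
    assume "\<not> (\<forall>x\<in>{1..k}. n (\<tau> x) = n x)"
    let ?s = "inv \<tau>"
    have s: "?s permutes {1..k}" using permutes_inv[OF \<tau>] .
    have ss: "inv ?s = \<tau>" using permutes_inv_inv[OF \<tau>] .
    have "act_zexp ?s (zexp k n) \<noteq> zexp k n"
      using \<open>\<not> _\<close> by (simp add: act_zexp_eq_iff[OF s] ss)
    then have "act_zexp ?s (zexp k n) < zexp k n"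
      using act_zexp_le[of ?s k n, OF s dec] by simp
    then have "\<exists>x0. Poly_Mapping.lookup (act_zexp ?s (zexp k n)) x0 < Poly_Mapping.lookup (zexp k n) x0"
      unfolding less_poly_mapping.rep_eq less_fun_def by blast
    then obtain x0 where x0: "Poly_Mapping.lookup (act_zexp ?s (zexp k n)) x0 < Poly_Mapping.lookup (zexp k n) x0"
      by blast
    have x0r: "x0 \<in> {1..k}" using x0 by (auto simp: lookup_zexp lookup_act_zexp_zexp[OF s] split: if_splits)
    have nx0: "n (\<tau> x0) < n x0" using x0 x0r by (simp add: lookup_zexp lookup_act_zexp_zexp[OF s] ss)
    define T where "T = {i \<in> {1..k}. n x0 \<le> n i}"
    define Pre where "Pre = {y \<in> {1..k}. \<tau> y \<in> T}"
    have finT: "finite T" by (simp add: T_def)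
    have "\<tau> ` Pre = T"
    proof
      show "\<tau> ` Pre \<subseteq> T" by (auto simp: Pre_def)
      show "T \<subseteq> \<tau> ` Pre"
      proof
        fix i assume iT: "i \<in> T"
        then have ir: "i \<in> {1..k}" by (simp add: T_def)
        have "?s i \<in> {1..k}" using perm_range[OF s ir] .
        moreover have "\<tau> (?s i) = i" using permutes_inverses(1)[OF \<tau>] by simp
        ultimately show "i \<in> \<tau> ` Pre" using iT by (metis (mono_tags, lifting) Pre_def image_eqI mem_Collect_eq)
      qed
    qed
    then have cardPre: "card Pre = card T"
      using permutes_inj[OF \<tau>] by (metis card_image inj_on_subset subset_UNIV)
    have "\<not> Pre \<subseteq> T"
    proof
      assume sub: "Pre \<subseteq> T"
      then have "Pre = T" using card_subset_eq[OF finT sub cardPre] by simp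
      moreover have "x0 \<in> T" using x0r by (simp add: T_def)
      ultimately have "x0 \<in> Pre" by simp
      then have "\<tau> x0 \<in> T" unfolding Pre_def by blast
      then show False using nx0 by (simp add: T_def)
    qed
    then obtain y where y: "y \<in> {1..k}" "\<tau> y \<in> T" "y \<notin> T" by (auto simp: Pre_def)
    have ny: "n y < n x0" using y by (simp add: T_def)
    have yx: "x0 < y"
    proof (rule ccontr)
      assume "\<not> x0 < y"
      then have "n x0 \<le> n y" using dec[of y x0] y(1) x0r by auto
      then show False using ny by simp
    qed
    have tyT: "n x0 \<le> n (\<tau> y)" using y(2) by (simp add: T_def)
    have txy: "\<tau> y < \<tau> x0"
    proof (rule ccontr)
      assume "\<not> \<tau> y < \<tau> x0"
      then have "n (\<tau> y) \<le> n (\<tau> x0)"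
        using dec[of "\<tau> x0" "\<tau> y"] perm_range[OF \<tau> x0r] perm_range[OF \<tau> y(1)] by auto
      then show False using tyT nx0 by simp
    qed
    have "n y = n x0" using adm y(1) x0r yx txy unfolding admissible_def by blast
    then show False using ny by simp
  qed
qed

definition G :: "nat \<Rightarrow> (nat \<Rightarrow> nat) \<Rightarrow> dpoly" where
  "G k \<sigma> = (\<Prod>p\<in>{p \<in> pairs k. \<sigma> (fst p) < \<sigma> (snd p)}. 1 - Delta (\<sigma> (fst p)) (\<sigma> (snd p)))"

lemma G_inv:
  assumes \<tau>: "\<tau> permutes {1..k}"
  shows "G k (inv \<tau>) = (\<Prod>q\<in>{q \<in> pairs k. \<tau> (fst q) < \<tau> (snd q)}. 1 - Delta (fst q) (snd q))"
proof -
  let ?A = "{p \<in> pairs k. inv \<tau> (fst p) < inv \<tau> (snd p)}"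
  let ?B = "{q \<in> pairs k. \<tau> (fst q) < \<tau> (snd q)}"
  let ?h = "\<lambda>p. (inv \<tau> (fst p), inv \<tau> (snd p))"
  let ?h' = "\<lambda>q. (\<tau> (fst q), \<tau> (snd q))"
  have s: "inv \<tau> permutes {1..k}" using permutes_inv[OF \<tau>] .
  have i1: "\<tau> (inv \<tau> x) = x" for x using permutes_inverses(1)[OF \<tau>] .
  have i2: "inv \<tau> (\<tau> x) = x" for x using permutes_inverses(2)[OF \<tau>] .
  have bij: "bij_betw ?h ?A ?B"
  proof (rule bij_betw_byWitness[where f' = ?h'])
    show "\<forall>a\<in>?A. ?h' (?h a) = a" by (simp add: i1)
    show "\<forall>a'\<in>?B. ?h (?h' a') = a'" by (simp add: i2)
    show "?h ` ?A \<subseteq> ?B"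
    proof
      fix q assume "q \<in> ?h ` ?A"
      then obtain p where p: "p \<in> ?A" "q = ?h p" by blast
      then have r: "fst p \<in> {1..k}" "snd p \<in> {1..k}" by (auto simp: pairs_def)
      have "inv \<tau> (fst p) \<in> {1..k}" "inv \<tau> (snd p) \<in> {1..k}"
        using perm_range[OF s r(1)] perm_range[OF s r(2)] .
      then show "q \<in> ?B" using p by (auto simp: pairs_def i1)
    qed
    show "?h' ` ?B \<subseteq> ?A"
    proof
      fix q assume "q \<in> ?h' ` ?B"
      then obtain p where p: "p \<in> ?B" "q = ?h' p" by blast
      then have r: "fst p \<in> {1..k}" "snd p \<in> {1..k}" by (auto simp: pairs_def)
      have "\<tau> (fst p) \<in> {1..k}" "\<tau> (snd p) \<in> {1..k}"
        using perm_range[OF \<tau> r(1)] perm_range[OF \<tau> r(2)] .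
      then show "q \<in> ?A" using p by (auto simp: pairs_def i2)
    qed
  qed
  have "G k (inv \<tau>) = (\<Prod>p\<in>?A. (\<lambda>q. 1 - Delta (fst q) (snd q)) (?h p))"
    by (simp add: G_def)
  also have "\<dots> = (\<Prod>q\<in>?B. 1 - Delta (fst q) (snd q))"
    by (rule prod.reindex_bij_betw[OF bij])
  finally show ?thesis .
qed

lemma lead_G:
  assumes dec: "\<And>i j. 1 \<le> i \<Longrightarrow> i \<le> j \<Longrightarrow> j \<le> k \<Longrightarrow> n j \<le> n i"
  shows "lead_coeff_shuffle k n = (\<Sum>\<sigma>\<in>{\<sigma> \<in> Perms k. act_zexp \<sigma> (zexp k n) = zexp k n}. G k \<sigma>)"
proof -
  let ?S = "{\<tau>. \<tau> permutes {1..k} \<and> admissible k n \<tau>}"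
  let ?T = "{\<sigma> \<in> Perms k. act_zexp \<sigma> (zexp k n) = zexp k n}"
  have T: "?T = {\<sigma>. \<sigma> permutes {1..k} \<and> (\<forall>x\<in>{1..k}. n (inv \<sigma> x) = n x)}"
    using act_zexp_eq_iff by (auto simp: Perms_def)
  have bij: "bij_betw inv ?S ?T"
  proof (rule bij_betw_byWitness[where f' = inv])
    show "\<forall>a\<in>?S. inv (inv a) = a" using permutes_inv_inv by blast
    show "\<forall>a\<in>?T. inv (inv a) = a" using permutes_inv_inv by (auto simp: Perms_def)
    show "inv ` ?S \<subseteq> ?T"
    proof
      fix s assume "s \<in> inv ` ?S"
      then obtain \<tau> where t: "\<tau> permutes {1..k}" "admissible k n \<tau>" "s = inv \<tau>" by blast
      then show "s \<in> ?T" unfolding T using permutes_inv[OF t(1)] permutes_inv_inv[OF t(1)]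
          admissible_iff[OF t(1) dec] by simp
    qed
    show "inv ` ?T \<subseteq> ?S"
    proof
      fix s assume "s \<in> inv ` ?T"
      then obtain \<sigma> where t: "\<sigma> permutes {1..k}" "\<forall>x\<in>{1..k}. n (inv \<sigma> x) = n x" "s = inv \<sigma>"
        unfolding T by blast
      then show "s \<in> ?S" using permutes_inv[OF t(1)] admissible_iff[OF permutes_inv[OF t(1)] dec] by simp
    qed
  qed
  have "(\<Sum>\<sigma>\<in>?T. G k \<sigma>) = (\<Sum>\<tau>\<in>?S. G k (inv \<tau>))"
    using sum.reindex_bij_betw[OF bij, of "G k"] by simp
  also have "\<dots> = (\<Sum>\<tau>\<in>?S. \<Prod>(i, j)\<in>{(i, j) \<in> pairs k. \<tau> i < \<tau> j}. 1 - Delta i j)"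
  proof (rule sum.cong[OF refl])
    fix \<tau> assume "\<tau> \<in> ?S"
    then have t: "\<tau> permutes {1..k}" by simp
    have "{(i, j) \<in> pairs k. \<tau> i < \<tau> j} = {q \<in> pairs k. \<tau> (fst q) < \<tau> (snd q)}" by auto
    then show "G k (inv \<tau>) = (\<Prod>(i, j)\<in>{(i, j) \<in> pairs k. \<tau> i < \<tau> j}. 1 - Delta i j)"
      using G_inv[OF t] by (simp add: split_def)
  qed
  finally show ?thesis by (simp add: lead_coeff_shuffle_def)
qed

definition epsd :: "nat \<Rightarrow> (nat \<Rightarrow> nat) \<Rightarrow> dpoly" where
  "epsd k \<sigma> = (-1) ^ card (invs k \<sigma>)"

lemma const_mult: "const (a * b) = const a * const b"
  by (simp add: const_def mult_single)

lemma const_power_m1: "(- 1 :: lpoly) ^ m = const ((- 1) ^ m)"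
proof (induction m)
  case 0 then show ?case by (simp add: const_def)
next
  case (Suc m)
  have "const (- 1 :: dpoly) = - 1" by (simp add: const_def single_uminus)
  then show ?case using Suc by (simp add: const_mult const_def single_uminus)
qed

lemma eps_const: "eps k \<sigma> = const (epsd k \<sigma>)"
  by (simp add: eps_def epsd_def const_power_m1)

lemma epsd_cf:
  assumes \<sigma>: "\<sigma> permutes {1..k}"
  shows "epsd k \<sigma> * (\<Prod>p\<in>pairs k. cf \<sigma> p) = (-1) ^ card (pairs k) * G k \<sigma>"
proof -
  let ?N = "{p \<in> pairs k. \<sigma> (fst p) < \<sigma> (snd p)}"
  have finN: "finite ?N" using finite_pairs by simp
  have "(\<Prod>p\<in>pairs k. cf \<sigma> p) = (\<Prod>p\<in>?N. Delta (\<sigma> (fst p)) (\<sigma> (snd p)) - 1)"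
    by (rule prod.mono_neutral_cong_right) (auto simp: finite_pairs cf_def)
  also have "\<dots> = (\<Prod>p\<in>?N. (- 1) * (1 - Delta (\<sigma> (fst p)) (\<sigma> (snd p))))"
    by (rule prod.cong) auto
  also have "\<dots> = (- 1) ^ card ?N * G k \<sigma>"
    unfolding prod.distrib prod_constant G_def by (rule refl)
  finally have cfp: "(\<Prod>p\<in>pairs k. cf \<sigma> p) = (- 1) ^ card ?N * G k \<sigma>" .
  have un: "invs k \<sigma> \<union> ?N = pairs k"
  proof
    show "invs k \<sigma> \<union> ?N \<subseteq> pairs k" by (auto simp: invs_def)
    show "pairs k \<subseteq> invs k \<sigma> \<union> ?N"
    proof
      fix p assume p: "p \<in> pairs k"
      then have "fst p \<noteq> snd p" by (auto simp: pairs_def)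
      then have "\<sigma> (fst p) \<noteq> \<sigma> (snd p)" using permutes_inj[OF \<sigma>] by (auto simp: inj_eq)
      then show "p \<in> invs k \<sigma> \<union> ?N" using p by (auto simp: invs_def)
    qed
  qed
  have dis: "invs k \<sigma> \<inter> ?N = {}" by (auto simp: invs_def)
  have "card (invs k \<sigma>) + card ?N = card (pairs k)"
    using card_Un_disjoint[OF _ finN dis] un finite_pairs by (metis finite_Un)
  then show ?thesis unfolding cfp epsd_def by (simp add: power_add[symmetric] mult.assoc)
qed

lemma keys_const_mult: "Poly_Mapping.keys (const c * A) \<subseteq> Poly_Mapping.keys A"
  by (auto simp: in_keys_iff lookup_const_mult)

lemma topc_Alt:
  assumes dec: "\<And>i j. 1 \<le> i \<Longrightarrow> i \<le> j \<Longrightarrow> j \<le> k \<Longrightarrow> n j \<le> n i"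
  shows "topc (Alt k n) (zexp k n + rho k) ((-1) ^ card (pairs k) * lead_coeff_shuffle k n)"
proof -
  let ?z = "zexp k n"
  have le: "e \<le> ?z + rho k" if e_in: "e \<in> Poly_Mapping.keys (Alt k n)" for e
  proof -
    obtain \<sigma> where s: "\<sigma> \<in> Perms k" "e \<in> Poly_Mapping.keys (eps k \<sigma> * act \<sigma> (N0 k n))"
      using e_in keys_sum[of "\<lambda>\<sigma>. eps k \<sigma> * act \<sigma> (N0 k n)" "Perms k"] unfolding Alt_def by blast
    then have sp: "\<sigma> permutes {1..k}" by (simp add: Perms_def)
    have "e \<in> Poly_Mapping.keys (act \<sigma> (N0 k n))" using s(2) keys_const_mult unfolding eps_const by blast
    then have "e \<le> act_zexp \<sigma> ?z + rho k" using topc_le[OF topc_actN0[OF sp, where n = n]] by blast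
    also have "\<dots> \<le> ?z + rho k" using act_zexp_le[of \<sigma> k n, OF sp dec] by (rule add_right_mono)
    finally show ?thesis .
  qed
  have trm: "Poly_Mapping.lookup (eps k \<sigma> * act \<sigma> (N0 k n)) (?z + rho k) =
      (if act_zexp \<sigma> ?z = ?z then (-1) ^ card (pairs k) * G k \<sigma> else 0)" if "\<sigma> \<in> Perms k" for \<sigma>
  proof -
    have sp: "\<sigma> permutes {1..k}" using that by (simp add: Perms_def)
    show ?thesis
    proof (cases "act_zexp \<sigma> ?z = ?z")
      case True
      have "Poly_Mapping.lookup (act \<sigma> (N0 k n)) (?z + rho k) = (\<Prod>p\<in>pairs k. cf \<sigma> p)"
        using topc_actN0[OF sp, where n = n] True by (simp add: topc_def)
      then show ?thesis using True epsd_cf[OF sp]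
        by (simp add: eps_const lookup_const_mult)
    next
      case False
      then have "act_zexp \<sigma> ?z < ?z" using act_zexp_le[of \<sigma> k n, OF sp dec] by simp
      then have "act_zexp \<sigma> ?z + rho k < ?z + rho k" by simp
      then have "Poly_Mapping.lookup (act \<sigma> (N0 k n)) (?z + rho k) = 0"
        by (rule topc_zero_above[OF topc_actN0[OF sp, where n = n]])
      then show ?thesis using False by (simp add: eps_const lookup_const_mult)
    qed
  qed
  have "Poly_Mapping.lookup (Alt k n) (?z + rho k) =
      (\<Sum>\<sigma>\<in>Perms k. if act_zexp \<sigma> ?z = ?z then (-1) ^ card (pairs k) * G k \<sigma> else 0)"
    unfolding Alt_def lookup_sum by (rule sum.cong[OF refl]) (rule trm)
  also have "\<dots> = (\<Sum>\<sigma>\<in>{\<sigma> \<in> Perms k. act_zexp \<sigma> ?z = ?z}. (-1) ^ card (pairs k) * G k \<sigma>)"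
    by (rule sum.mono_neutral_cong_right) (auto simp: finite_Perms)
  also have "\<dots> = (-1) ^ card (pairs k) * lead_coeff_shuffle k n"
    by (simp add: lead_G[OF dec] sum_distrib_left)
  finally show ?thesis using le by (simp add: topc_def)
qed

lemma coeff_top_mod:
  assumes A: "topc A \<alpha> c"
    and B: "\<And>f. f \<in> Poly_Mapping.keys B \<Longrightarrow> \<beta> < f \<Longrightarrow> Poly_Mapping.lookup B f \<in> Fk_ideal k"
  shows "Poly_Mapping.lookup (A * B) (\<alpha> + \<beta>) - c * Poly_Mapping.lookup B \<beta> \<in> Fk_ideal k"
proof -
  let ?t = "\<lambda>a b. (Poly_Mapping.lookup A a * Poly_Mapping.lookup B b when \<alpha> + \<beta> = a + b)"
  let ?u = "\<lambda>a b. (Poly_Mapping.lookup A a * Poly_Mapping.lookup B b when a = \<alpha> \<and> b = \<beta>)"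
  have d: "?t a b - ?u a b \<in> Fk_ideal k" if a: "a \<in> Poly_Mapping.keys A" and b: "b \<in> Poly_Mapping.keys B" for a b
  proof (cases "\<alpha> + \<beta> = a + b \<and> \<not> (a = \<alpha> \<and> b = \<beta>)")
    case True
    have aa: "a \<le> \<alpha>" using topc_le[OF A a] .
    have "\<beta> < b"
    proof (rule ccontr)
      assume "\<not> \<beta> < b"
      then have "b \<le> \<beta>" by simp
      then have "a = \<alpha> \<and> b = \<beta>"
        using aa True by (metis add_le_cancel_left add_le_cancel_right antisym)
      then show False using True by simp
    qed
    then have "Poly_Mapping.lookup B b \<in> Fk_ideal k" using B[OF b] by simp
    then show ?thesis using True by (simp add: Fk_ideal.mult)
  next
    case False
    then have "?t a b = ?u a b" by (auto simp: when_def)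
    then show ?thesis by (simp add: Fk_ideal.zero)
  qed
  have su: "(\<Sum>a\<in>Poly_Mapping.keys A. \<Sum>b\<in>Poly_Mapping.keys B. ?u a b) = Poly_Mapping.lookup A \<alpha> * Poly_Mapping.lookup B \<beta>"
  proof (cases "\<alpha> \<in> Poly_Mapping.keys A \<and> \<beta> \<in> Poly_Mapping.keys B")
    case True
    let ?X = "Poly_Mapping.lookup A \<alpha> * Poly_Mapping.lookup B \<beta>"
    have "(\<Sum>a\<in>Poly_Mapping.keys A. \<Sum>b\<in>Poly_Mapping.keys B. ?u a b) =
       (\<Sum>a\<in>Poly_Mapping.keys A. if a = \<alpha> then (\<Sum>b\<in>Poly_Mapping.keys B. if b = \<beta> then ?X else 0) else 0)"
      by (intro sum.cong refl) (auto simp: when_def)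
    also have "\<dots> = ?X" using True by simp
    finally show ?thesis .
  next
    case False
    then have "Poly_Mapping.lookup A \<alpha> * Poly_Mapping.lookup B \<beta> = 0" by (auto simp: in_keys_iff)
    moreover have "\<forall>a\<in>Poly_Mapping.keys A. \<forall>b\<in>Poly_Mapping.keys B. ?u a b = 0"
      using False by (auto simp: when_def)
    ultimately show ?thesis by simp
  qed
  have "Poly_Mapping.lookup (A * B) (\<alpha> + \<beta>) - c * Poly_Mapping.lookup B \<beta> =
      (\<Sum>a\<in>Poly_Mapping.keys A. \<Sum>b\<in>Poly_Mapping.keys B. ?t a b - ?u a b)"
    unfolding lookup_mult_keys using su A by (simp add: sum_subtractf topc_def)
  also have "\<dots> \<in> Fk_ideal k"
    by (intro Fk_ideal_sum d)
  finally show ?thesis .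
qed

lemma V_rho_sq: "((-1::dpoly) ^ card (pairs k)) * ((-1) ^ card (pairs k)) = 1"
  by (simp add: power_add[symmetric] flip: power_add)

lemma lead_L:
  assumes dec: "\<And>i j. 1 \<le> i \<Longrightarrow> i \<le> j \<Longrightarrow> j \<le> k \<Longrightarrow> n j \<le> n i"
    and IL: "IL k (Alt k n - V k * L)"
  shows "\<And>e. zexp k n < e \<Longrightarrow> Poly_Mapping.lookup L e \<in> Fk_ideal k"
    and "Poly_Mapping.lookup L (zexp k n) - lead_coeff_shuffle k n \<in> Fk_ideal k"
proof -
  let ?z = "zexp k n" and ?c = "(-1::dpoly) ^ card (pairs k)"
  have TA: "topc (Alt k n) (?z + rho k) (?c * lead_coeff_shuffle k n)" using topc_Alt[OF dec] .
  have TV: "topc (V k) (rho k) ?c" using topc_V .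
  have diff: "Poly_Mapping.lookup (Alt k n) x - Poly_Mapping.lookup (V k * L) x \<in> Fk_ideal k" for x
    using IL by (simp add: IL_def lookup_minus)
  have cancel: "y \<in> Fk_ideal k" if "?c * y \<in> Fk_ideal k" for y
    using Fk_ideal.mult[OF that, of ?c] by (simp add: mult.assoc[symmetric] V_rho_sq)
  show A: "Poly_Mapping.lookup L e \<in> Fk_ideal k" if ze: "?z < e" for e
  proof (rule ccontr)
    assume notI: "Poly_Mapping.lookup L e \<notin> Fk_ideal k"
    define S where "S = {f \<in> Poly_Mapping.keys L. ?z < f \<and> Poly_Mapping.lookup L f \<notin> Fk_ideal k}"
    have eS: "e \<in> S" using ze notI by (auto simp: S_def in_keys_iff Fk_ideal.zero)
    have finS: "finite S" by (simp add: S_def)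
    define m where "m = Max S"
    have mS: "m \<in> S" using finS eS unfolding m_def by (intro Max_in) auto
    have hyp: "Poly_Mapping.lookup L f \<in> Fk_ideal k" if "f \<in> Poly_Mapping.keys L" "m < f" for f
    proof (rule ccontr)
      assume "Poly_Mapping.lookup L f \<notin> Fk_ideal k"
      moreover have "?z < f" using mS that(2) by (auto simp: S_def)
      ultimately have "f \<in> S" using that(1) by (simp add: S_def)
      then have "f \<le> m" using finS unfolding m_def by simp
      then show False using that(2) by simp
    qed
    have c1: "Poly_Mapping.lookup (V k * L) (rho k + m) - ?c * Poly_Mapping.lookup L m \<in> Fk_ideal k"
      using coeff_top_mod[OF TV hyp] by blast
    have "?z + rho k < m + rho k" using mS by (simp add: S_def)
    then have "Poly_Mapping.lookup (Alt k n) (m + rho k) = 0" by (rule topc_zero_above[OF TA])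
    then have "- Poly_Mapping.lookup (V k * L) (m + rho k) \<in> Fk_ideal k" using diff[of "m + rho k"] by simp
    then have "Poly_Mapping.lookup (V k * L) (m + rho k) \<in> Fk_ideal k" using Fk_ideal_uminus by fastforce
    moreover have c1': "Poly_Mapping.lookup (V k * L) (m + rho k) - ?c * Poly_Mapping.lookup L m \<in> Fk_ideal k"
      using c1 by (simp add: add.commute)
    ultimately have "Poly_Mapping.lookup (V k * L) (m + rho k) - (Poly_Mapping.lookup (V k * L) (m + rho k) - ?c * Poly_Mapping.lookup L m) \<in> Fk_ideal k"
      by (rule Fk_ideal_diff)
    then have "?c * Poly_Mapping.lookup L m \<in> Fk_ideal k" by simp
    then have "Poly_Mapping.lookup L m \<in> Fk_ideal k" by (rule cancel)
    then show False using mS by (simp add: S_def)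
  qed
  have c1: "Poly_Mapping.lookup (V k * L) (rho k + ?z) - ?c * Poly_Mapping.lookup L ?z \<in> Fk_ideal k"
    using coeff_top_mod[OF TV A] by blast
  have "Poly_Mapping.lookup (Alt k n) (?z + rho k) = ?c * lead_coeff_shuffle k n"
    using TA by (simp add: topc_def)
  then have "?c * lead_coeff_shuffle k n - Poly_Mapping.lookup (V k * L) (?z + rho k) \<in> Fk_ideal k"
    using diff[of "?z + rho k"] by simp
  then have "(?c * lead_coeff_shuffle k n - Poly_Mapping.lookup (V k * L) (?z + rho k)) +
      (Poly_Mapping.lookup (V k * L) (rho k + ?z) - ?c * Poly_Mapping.lookup L ?z) \<in> Fk_ideal k"
    using c1 by (rule Fk_ideal.add)
  then have "?c * (lead_coeff_shuffle k n - Poly_Mapping.lookup L ?z) \<in> Fk_ideal k"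
    by (simp add: add.commute algebra_simps)
  then have "lead_coeff_shuffle k n - Poly_Mapping.lookup L ?z \<in> Fk_ideal k" by (rule cancel)
  then show "Poly_Mapping.lookup L ?z - lead_coeff_shuffle k n \<in> Fk_ideal k"
    using Fk_ideal_uminus by fastforce
qed

lemma lex_less_of_less:
  assumes "Poly_Mapping.keys e \<subseteq> {1..k}" "e < zexp k n"
  shows "lex_less k e n"
proof -
  obtain x where x: "Poly_Mapping.lookup e x < Poly_Mapping.lookup (zexp k n) x"
      "\<forall>y<x. Poly_Mapping.lookup e y = Poly_Mapping.lookup (zexp k n) y"
    using assms(2) unfolding less_poly_mapping.rep_eq less_fun_def by blast
  have xr: "x \<in> {1..k}"
  proof (rule ccontr)
    assume nx: "x \<notin> {1..k}"
    then have "x \<notin> Poly_Mapping.keys e" using assms(1) by blast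
    then have "Poly_Mapping.lookup e x = 0" by (simp add: in_keys_iff)
    moreover have "Poly_Mapping.lookup (zexp k n) x = 0" using nx by (simp only: lookup_zexp if_False)
    ultimately show False using x(1) by simp
  qed
  show ?thesis unfolding lex_less_def
  proof (intro bexI[OF _ xr] conjI ballI)
    fix j assume j: "j \<in> {1..<x}"
    then have "j \<in> {1..k}" using xr by auto
    then show "Poly_Mapping.lookup e j = n j" using x(2) j by (simp add: lookup_zexp)
  next
    show "Poly_Mapping.lookup e x < n x" using x(1) xr by (simp add: lookup_zexp)
  qed
qed

lemma prod_eps_remove:
  assumes "finite P" "\<sigma> \<in> P"
  shows "(\<Prod>\<tau>\<in>P - {\<sigma>}. eps k \<tau>) = eps k \<sigma> * (\<Prod>\<tau>\<in>P. eps k \<tau>)"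
proof -
  have "(\<Prod>\<tau>\<in>P. eps k \<tau>) = eps k \<sigma> * (\<Prod>\<tau>\<in>P - {\<sigma>}. eps k \<tau>)"
    using prod.remove[OF assms] .
  then have "eps k \<sigma> * (\<Prod>\<tau>\<in>P. eps k \<tau>) = (eps k \<sigma> * eps k \<sigma>) * (\<Prod>\<tau>\<in>P - {\<sigma>}. eps k \<tau>)"
    by (simp add: mult.assoc)
  then show ?thesis by (simp add: eps_sq)
qed

theorem proposition4p6:
  fixes k :: nat and n :: "nat \<Rightarrow> int"
  assumes "\<And>i j. 1 \<le> i \<Longrightarrow> i \<le> j \<Longrightarrow> j \<le> k \<Longrightarrow> n j \<le> n i"
  shows "\<exists>R :: lpoly.
           (\<forall>e\<in>Poly_Mapping.keys R. Poly_Mapping.keys e \<subseteq> {1..k} \<and> lex_less k e n \<and> in_Fk k (Poly_Mapping.lookup R e)) \<and>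
           frac_eq k (shuffle_monomials k n)
             (frac_of (zmono k n * const (lead_coeff_shuffle k n) + R))"
proof -
  note dec = assms
  let ?z = "zexp k n"
  obtain L where L: "good k L" "IL k (Alt k n - V k * L)"
    using div_gen[OF good_Alt subst_Alt, of k "pairs k" n] by (auto simp: V_def)
  define KR where "KR = {e \<in> Poly_Mapping.keys L. e < ?z}"
  define R where "R = (\<Sum>e\<in>KR. Poly_Mapping.single e (Poly_Mapping.lookup L e))"
  have lookR: "Poly_Mapping.lookup R e = (if e < ?z then Poly_Mapping.lookup L e else 0)" for e
  proof -
    have "Poly_Mapping.lookup R e = (\<Sum>f\<in>KR. (Poly_Mapping.lookup L f when f = e))"
      unfolding R_def lookup_sum lookup_single by (rule refl)
    also have "\<dots> = (if e \<in> KR then Poly_Mapping.lookup L e else 0)"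
      by (simp add: when_def KR_def)
    also have "\<dots> = (if e < ?z then Poly_Mapping.lookup L e else 0)"
      by (auto simp: KR_def in_keys_iff)
    finally show ?thesis .
  qed
  have keysR: "Poly_Mapping.keys R \<subseteq> KR"
    by (auto simp: in_keys_iff lookR KR_def split: if_splits)
  define L' where "L' = zmono k n * const (lead_coeff_shuffle k n) + R"
  have lookL': "Poly_Mapping.lookup L' e = (lead_coeff_shuffle k n when e = ?z) + Poly_Mapping.lookup R e" for e
    by (simp add: L'_def zmono_def const_def mult_single lookup_add lookup_single when_def eq_commute)
  have ILL: "IL k (L - L')"
    unfolding IL_def
  proof
    fix e
    consider "e < ?z" | "e = ?z" | "?z < e" by fastforce
    then show "Poly_Mapping.lookup (L - L') e \<in> Fk_ideal k"
    proof cases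
      case 1 then show ?thesis by (simp add: lookup_minus lookL' lookR Fk_ideal.zero)
    next
      case 2 then show ?thesis using lead_L(2)[OF dec L(2)] by (simp add: lookup_minus lookL' lookR)
    next
      case 3
      then have "\<not> e < ?z" "e \<noteq> ?z" by auto
      then show ?thesis using lead_L(1)[OF dec L(2) 3] by (simp add: lookup_minus lookL' lookR)
    qed
  qed
  have ILA: "IL k (Alt k n - V k * L')"
  proof -
    have eq: "Alt k n - V k * L' = (Alt k n - V k * L) + V k * (L - L')" by (simp add: algebra_simps)
    show ?thesis unfolding eq by (intro IL_add L(2) IL_mult_left ILL)
  qed
  have Rprop: "\<forall>e\<in>Poly_Mapping.keys R. Poly_Mapping.keys e \<subseteq> {1..k} \<and> lex_less k e n \<and> in_Fk k (Poly_Mapping.lookup R e)"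
  proof
    fix e assume e: "e \<in> Poly_Mapping.keys R"
    then have eK: "e \<in> Poly_Mapping.keys L" "e < ?z" using keysR by (auto simp: KR_def)
    have ke: "Poly_Mapping.keys e \<subseteq> {1..k}" using good_keys[OF L(1) eK(1)] .
    show "Poly_Mapping.keys e \<subseteq> {1..k} \<and> lex_less k e n \<and> in_Fk k (Poly_Mapping.lookup R e)"
      using ke lex_less_of_less[OF ke eK(2)] good_lookup[OF L(1)] eK(2) by (simp add: lookR)
  qed
  let ?P = "{\<sigma>. \<sigma> permutes {1..k}}"
  have finP: "finite ?P" using finite_Perms by (simp add: Perms_def)
  have nonempty: "?P \<noteq> {}" using permutes_id by blast
  define m where "m = card ?P"
  have m1: "m \<ge> 1" using finP nonempty by (simp add: m_def Suc_le_eq card_gt_0_iff)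
  define E where "E = (\<Prod>\<tau>\<in>?P. eps k \<tau>)"
  have zN: "(\<Prod>x\<in>pairs k. fst (case x of (i, j) \<Rightarrow> zeta i j)) = (\<Prod>p\<in>pairs k. zf (fst p) (snd p))"
    by (rule prod.cong) (auto simp: zeta_def zf_def split: prod.splits)
  have zD: "(\<Prod>x\<in>pairs k. snd (case x of (i, j) \<Rightarrow> zeta i j)) = V k"
    unfolding V_def Vp_def by (rule prod.cong) (auto simp: zeta_def split: prod.splits)
  have sh: "shuffle_monomials k n =
     ((\<Sum>\<sigma>\<in>?P. act \<sigma> (N0 k n) * (\<Prod>\<tau>\<in>?P - {\<sigma>}. act \<tau> (V k))), (\<Prod>\<tau>\<in>?P. act \<tau> (V k)))"
    unfolding shuffle_monomials_def Sym_def frac_sum_def frac_mult_def frac_of_def frac_prod_def act_frac_def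
    by (simp add: zN zD N0_def)
  have num: "(\<Sum>\<sigma>\<in>?P. act \<sigma> (N0 k n) * (\<Prod>\<tau>\<in>?P - {\<sigma>}. act \<tau> (V k))) = E * V k ^ (m - 1) * Alt k n"
  proof -
    have "(\<Sum>\<sigma>\<in>?P. act \<sigma> (N0 k n) * (\<Prod>\<tau>\<in>?P - {\<sigma>}. act \<tau> (V k))) =
        (\<Sum>\<sigma>\<in>?P. act \<sigma> (N0 k n) * (eps k \<sigma> * E * V k ^ (m - 1)))"
    proof (rule sum.cong[OF refl])
      fix \<sigma> assume s: "\<sigma> \<in> ?P"
      have "(\<Prod>\<tau>\<in>?P - {\<sigma>}. act \<tau> (V k)) = (\<Prod>\<tau>\<in>?P - {\<sigma>}. eps k \<tau> * V k)"
        by (rule prod.cong) (auto simp: act_V)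
      also have "\<dots> = (\<Prod>\<tau>\<in>?P - {\<sigma>}. eps k \<tau>) * V k ^ (m - 1)"
        using finP s by (simp add: prod.distrib m_def card_Diff_singleton)
      also have "\<dots> = eps k \<sigma> * E * V k ^ (m - 1)"
        using prod_eps_remove[OF finP s] by (simp add: E_def)
      finally show "act \<sigma> (N0 k n) * (\<Prod>\<tau>\<in>?P - {\<sigma>}. act \<tau> (V k)) = act \<sigma> (N0 k n) * (eps k \<sigma> * E * V k ^ (m - 1))"
        by simp
    qed
    also have "\<dots> = E * V k ^ (m - 1) * Alt k n"
      by (simp add: Alt_def Perms_def sum_distrib_left algebra_simps)
    finally show ?thesis .
  qed
  have den: "(\<Prod>\<tau>\<in>?P. act \<tau> (V k)) = E * V k ^ (m - 1) * V k"
  proof -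
    have "(\<Prod>\<tau>\<in>?P. act \<tau> (V k)) = (\<Prod>\<tau>\<in>?P. eps k \<tau> * V k)"
      by (rule prod.cong) (auto simp: act_V)
    also have "\<dots> = E * V k ^ m" by (simp add: prod.distrib E_def m_def)
    also have "\<dots> = E * V k ^ (m - 1) * V k" using m1
      by (metis (no_types, lifting) Suc_diff_1 less_le_trans mult.assoc power_Suc2 zero_less_one)
    finally show ?thesis .
  qed
  have "frac_eq k (shuffle_monomials k n) (frac_of L')"
    unfolding frac_eq_def Fk_eq_IL sh frac_of_def
  proof -
    have "fst ((\<Sum>\<sigma>\<in>?P. act \<sigma> (N0 k n) * (\<Prod>\<tau>\<in>?P - {\<sigma>}. act \<tau> (V k))), (\<Prod>\<tau>\<in>?P. act \<tau> (V k))) * snd (L', 1 :: lpoly) -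
        fst (L', 1 :: lpoly) * snd ((\<Sum>\<sigma>\<in>?P. act \<sigma> (N0 k n) * (\<Prod>\<tau>\<in>?P - {\<sigma>}. act \<tau> (V k))), (\<Prod>\<tau>\<in>?P. act \<tau> (V k)))
      = E * V k ^ (m - 1) * (Alt k n - V k * L')"
      unfolding num den by (simp add: algebra_simps)
    then show "IL k (fst ((\<Sum>\<sigma>\<in>?P. act \<sigma> (N0 k n) * (\<Prod>\<tau>\<in>?P - {\<sigma>}. act \<tau> (V k))), (\<Prod>\<tau>\<in>?P. act \<tau> (V k))) * snd (L', 1 :: lpoly) -
        fst (L', 1 :: lpoly) * snd ((\<Sum>\<sigma>\<in>?P. act \<sigma> (N0 k n) * (\<Prod>\<tau>\<in>?P - {\<sigma>}. act \<tau> (V k))), (\<Prod>\<tau>\<in>?P. act \<tau> (V k))))"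
      using IL_mult_left[OF ILA] by simp
  qed
  then show ?thesis using Rprop unfolding L'_def by blast
qed

end
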